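(* Let $(\mathfrak{h},[\cdot,\cdot])$ be a finite-dimensional real left Leibniz algebra with $H^0(\mathfrak{h})=H^1(\mathfrak{h})=0$. Let $(A_{n,1})_{n\ge0}$ be a sequence with $A_{0,1}(x,y)=y$, $A_{1,1}(x,y)=[x,y]$, and for each $n\ge2$, $A_{n,1}:\mathfrak{h}^{n+1}\to\mathfrak{h}$ multilinear, invariant, and symmetric in its first $n$ arguments. Writing $A_{p,1}(x,y)=A_{p,1}(x,\ldots,x,y)$, assume that for all $p\ge1$ and all $x,y,z\in\mathfrak{h}$, \[A_{p,1}(x,[y,z])=[y,A_{p,1}(x,z)]+[A_{p,1}(x,y),z]+\sum_{r=1}^{p-1}[A_{r,1}(x,y),A_{p-r,1}(x,z)].\] Then there exists a unique sequence $(B_n)_{n\ge2}$ of invariant symmetric multilinear maps $B_n:\mathfrak{h}^n\to\mathfrak{h}$ such that for every $n\ge2$ and all $x,y\in\mathfrak{h}$, \[A_{n,1}(x,y)=A^0_{n,1}(x,y)+\sum_{k=1}^{[n/2]}\ \sum_{\substack{(l_1,\ldots,l_k),\ l_i\ge2\\ s=l_1+\cdots+l_k\le n}}A^0_{k,1}\big(B_{l_1}(x),\ldots,B_{l_k}(x),A^0_{n-s,1}(x,y)\big),\] where $B_l(x)=B_l(x,\ldots,x)$ and the inner sum is over ordered tuples.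
   Context: Left Leibniz algebra: bilinear bracket with $[u,[v,w]]=[[u,v],w]+[v,[u,w]]$; $\mathrm{ad}_x(y)=[x,y]$. $H^0(\mathfrak{h})=\{x\in\mathfrak{h}:[x,m]=0\ \forall m\in\mathfrak{h}\}$. $H^1(\mathfrak{h})$ is the quotient of the space of linear maps $F:\mathfrak{h}\to\mathfrak{h}$ with $F([y,z])=[y,F(z)]+[F(y),z]$ for all $y,z$, by the subspace $\{\mathrm{ad}_x:x\in\mathfrak{h}\}$. A multilinear map $A:\mathfrak{h}^{m}\to\mathfrak{h}$ is invariant if $[x,A(y_1,\ldots,y_m)]=\sum_{i=1}^mA(y_1,\ldots,[x,y_i],\ldots,y_m)$ for all $x,y_1,\ldots,y_m$. The maps $A^0_{k,1}$ are defined by $A^0_{0,1}(x,y)=y$ and $A^0_{k,1}(x_1,\ldots,x_k,y)=\frac{1}{(k!)^2}\sum_{\sigma\in S_k}\mathrm{ad}_{x_{\sigma(1)}}\circ\cdots\circ\mathrm{ad}_{x_{\sigma(k)}}(y)$ for $k\ge1$, with $A^0_{k,1}(x,y)=A^0_{k,1}(x,\ldots,x,y)$. *)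

theory Defs
  imports "HOL-Analysis.Analysis" "HOL-Combinatorics.Permutations"
begin

definition left_leibniz :: "('a::real_vector \<Rightarrow> 'a \<Rightarrow> 'a) \<Rightarrow> bool" where
  "left_leibniz br \<longleftrightarrow> bilinear br \<and>
     (\<forall>u v w. br u (br v w) = br (br u v) w + br v (br u w))"

definition H0_zero :: "('a::real_vector \<Rightarrow> 'a \<Rightarrow> 'a) \<Rightarrow> bool" where
  "H0_zero br \<longleftrightarrow> {x. \<forall>m. br x m = 0} = {0}"

definition derivations :: "('a::real_vector \<Rightarrow> 'a \<Rightarrow> 'a) \<Rightarrow> ('a \<Rightarrow> 'a) set" where
  "derivations br = {F. linear F \<and> (\<forall>y z. F (br y z) = br y (F z) + br (F y) z)}"

definition inner_derivations :: "('a::real_vector \<Rightarrow> 'a \<Rightarrow> 'a) \<Rightarrow> ('a \<Rightarrow> 'a) set" where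
  "inner_derivations br = {br x | x. True}"

definition H1_zero :: "('a::real_vector \<Rightarrow> 'a \<Rightarrow> 'a) \<Rightarrow> bool" where
  "H1_zero br \<longleftrightarrow> derivations br \<subseteq> inner_derivations br"

text \<open>m-ary maps are represented as functions on lists; only lists of length m matter.\<close>
definition multilinear :: "nat \<Rightarrow> ('a::real_vector list \<Rightarrow> 'b::real_vector) \<Rightarrow> bool" where
  "multilinear m F \<longleftrightarrow> (\<forall>xs i. length xs = m \<and> i < m \<longrightarrow> linear (\<lambda>v. F (xs[i := v])))"

definition invariant :: "('a::real_vector \<Rightarrow> 'a \<Rightarrow> 'a) \<Rightarrow> nat \<Rightarrow> ('a list \<Rightarrow> 'a) \<Rightarrow> bool" where
  "invariant br m F \<longleftrightarrow> (\<forall>x ys. length ys = m \<longrightarrow>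
      br x (F ys) = (\<Sum>i<m. F (ys[i := br x (ys ! i)])))"

definition symmetric_map :: "nat \<Rightarrow> ('a list \<Rightarrow> 'b) \<Rightarrow> bool" where
  "symmetric_map m F \<longleftrightarrow> (\<forall>xs \<sigma>. length xs = m \<and> \<sigma> permutes {..<m} \<longrightarrow>
      F (permute_list \<sigma> xs) = F xs)"

definition symmetric_first :: "nat \<Rightarrow> ('a list \<Rightarrow> 'b) \<Rightarrow> bool" where
  "symmetric_first n F \<longleftrightarrow> (\<forall>xs y \<sigma>. length xs = n \<and> \<sigma> permutes {..<n} \<longrightarrow>
      F (permute_list \<sigma> xs @ [y]) = F (xs @ [y]))"

definition A0 :: "('a::real_vector \<Rightarrow> 'a \<Rightarrow> 'a) \<Rightarrow> 'a list \<Rightarrow> 'a \<Rightarrow> 'a" where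
  "A0 br xs y = (1 / (fact (length xs))^2) *\<^sub>R
     (\<Sum>\<sigma>\<in>{\<sigma>. \<sigma> permutes {..<length xs}}. foldr br (permute_list \<sigma> xs) y)"

definition diag :: "nat \<Rightarrow> ('a list \<Rightarrow> 'a) \<Rightarrow> 'a \<Rightarrow> 'a \<Rightarrow> 'a" where
  "diag p F x y = F (replicate p x @ [y])"

end

theory Submission
  imports Defs
begin

lemma multilinear_comp_list:
  assumes "multilinear M F"
    and "\<And>zs. length zs = N \<Longrightarrow> length (h zs) = M"
    and "\<And>i. i < N \<Longrightarrow> \<pi> i < M"
    and "\<And>zs i v. length zs = N \<Longrightarrow> i < N \<Longrightarrow> h (zs[i := v]) = (h zs)[\<pi> i := v]"
  shows "multilinear N (\<lambda>zs. F (h zs))"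
  using assms unfolding multilinear_def by simp

lemma multilinear_add:
  "multilinear N F \<Longrightarrow> multilinear N G \<Longrightarrow> multilinear N (\<lambda>zs. F zs + G zs)"
  unfolding multilinear_def by (auto intro: linear_compose_add)

lemma multilinear_diff:
  "multilinear N F \<Longrightarrow> multilinear N G \<Longrightarrow> multilinear N (\<lambda>zs. F zs - G zs)"
  unfolding multilinear_def by (auto intro: linear_compose_sub)

lemma linear_scale_comp: assumes "linear f" shows "linear (\<lambda>v. c *\<^sub>R f v)"
  by (auto intro!: linearI simp: linear_add[OF assms] linear_scale[OF assms] scaleR_add_right)

lemma multilinear_scale:
  "multilinear N F \<Longrightarrow> multilinear N (\<lambda>zs. c *\<^sub>R F zs)"
  unfolding multilinear_def by (auto intro: linear_scale_comp)

lemma multilinear_zero: "multilinear N (\<lambda>zs. 0)"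
  unfolding multilinear_def by (auto intro: linear_zero)

lemma multilinear_sum:
  "finite S \<Longrightarrow> (\<And>s. s \<in> S \<Longrightarrow> multilinear N (F s)) \<Longrightarrow> multilinear N (\<lambda>zs. \<Sum>s\<in>S. F s zs)"
  by (induction S rule: finite_induct) (auto intro: multilinear_add multilinear_zero)

lemma multilinear_linear_comp:
  "multilinear N F \<Longrightarrow> linear L \<Longrightarrow> multilinear N (\<lambda>zs. L (F zs))"
  unfolding multilinear_def by (auto intro: linear_compose[unfolded o_def])

lemma multilinear_hd: "multilinear 1 (\<lambda>zs. hd zs)"
  unfolding multilinear_def
  by (auto simp: length_Suc_conv nth_list_update intro: linear_id[unfolded id_def])

locale L0 =
  fixes br :: "'a::euclidean_space \<Rightarrow> 'a \<Rightarrow> 'a"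
  assumes bil: "bilinear br"
begin

lemma br_simps[simp]:
  "br (a + b) c = br a c + br b c" "br c (a + b) = br c a + br c b"
  "br (a - b) c = br a c - br b c" "br c (a - b) = br c a - br c b"
  "br (r *\<^sub>R a) c = r *\<^sub>R br a c" "br c (r *\<^sub>R a) = r *\<^sub>R br c a"
  "br 0 c = 0" "br c 0 = 0" "br (- a) c = - br a c" "br c (- a) = - br c a"
  using bil by (simp_all add: bilinear_ladd bilinear_radd bilinear_lsub bilinear_rsub
     bilinear_lmul bilinear_rmul bilinear_lzero bilinear_rzero bilinear_lneg bilinear_rneg)

lemma br_sum_left: "br (\<Sum>i\<in>S. f i) c = (\<Sum>i\<in>S. br (f i) c)"
  by (induction S rule: infinite_finite_induct) auto
lemma br_sum_right: "br c (\<Sum>i\<in>S. f i) = (\<Sum>i\<in>S. br c (f i))"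
  by (induction S rule: infinite_finite_induct) auto

lemma linear_br_left: "linear (\<lambda>a. br a c)"
  using bil unfolding bilinear_def by simp
lemma linear_br_right: "linear (\<lambda>a. br c a)"
  using bil unfolding bilinear_def by simp

definition comb :: "nat \<Rightarrow> ('a list \<Rightarrow> 'a) \<Rightarrow> ('a list \<Rightarrow> 'a) \<Rightarrow> 'a list \<Rightarrow> 'a" where
  "comb p F G zs = br (F (take p zs)) (G (drop p zs))"

lemma multilinear_comb:
  assumes F: "multilinear p F" and G: "multilinear q G"
  shows "multilinear (p + q) (comb p F G)"
  unfolding multilinear_def
proof (intro allI impI)
  fix xs :: "'a list" and i assume a: "length xs = p + q \<and> i < p + q"
  show "linear (\<lambda>v. comb p F G (xs[i := v]))"
  proof (cases "i < p")
    case True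
    have "linear (\<lambda>v. F ((take p xs)[i := v]))" using F a True unfolding multilinear_def by auto
    then have "linear (\<lambda>v. br (F ((take p xs)[i := v])) (G (drop p xs)))"
      using linear_compose[OF _ linear_br_left] by (auto simp: o_def)
    then show ?thesis using True by (simp add: comb_def take_update_swap)
  next
    case False
    have "linear (\<lambda>v. G ((drop p xs)[i - p := v]))" using G a False unfolding multilinear_def by auto
    then have "linear (\<lambda>v. br (F (take p xs)) (G ((drop p xs)[i - p := v])))"
      using linear_compose[OF _ linear_br_right] by (auto simp: o_def)
    then show ?thesis using False by (simp add: comb_def drop_update_swap)
  qed
qed

end

lemma sum_lessThan_add_split:
  "(\<Sum>i<p+(q::nat). f i) = (\<Sum>i<p. f i) + (\<Sum>j<q. f (p + j))"
  by (induction q) (simp_all add: add.assoc)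

locale L1 = L0 +
  assumes leib: "\<And>u v w. br u (br v w) = br (br u v) w + br v (br u w)"
begin

lemma invariant_add:
  "invariant br N F \<Longrightarrow> invariant br N G \<Longrightarrow> invariant br N (\<lambda>zs. F zs + G zs)"
  unfolding invariant_def by (auto simp: sum.distrib)

lemma invariant_diff:
  "invariant br N F \<Longrightarrow> invariant br N G \<Longrightarrow> invariant br N (\<lambda>zs. F zs - G zs)"
  unfolding invariant_def by (auto simp: sum_subtractf)

lemma invariant_scale:
  "invariant br N F \<Longrightarrow> invariant br N (\<lambda>zs. c *\<^sub>R F zs)"
  unfolding invariant_def by (auto simp: scaleR_sum_right)

lemma invariant_zero: "invariant br N (\<lambda>zs. 0)"
  unfolding invariant_def by auto

lemma invariant_sum:
  assumes "finite S" "\<And>s. s \<in> S \<Longrightarrow> invariant br N (F s)"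
  shows "invariant br N (\<lambda>zs. \<Sum>s\<in>S. F s zs)"
  using assms by (induct S rule: finite_induct) (auto intro: invariant_add invariant_zero)

lemma invariant_hd: "invariant br 1 (\<lambda>zs. hd zs)"
  unfolding invariant_def by (auto simp: length_Suc_conv)

lemma invariant_comb:
  assumes F: "invariant br p F" and G: "invariant br q G"
  shows "invariant br (p + q) (comb p F G)"
  unfolding invariant_def
proof (intro allI impI)
  fix x :: 'a and ys :: "'a list" assume len: "length ys = p + q"
  have "br x (comb p F G ys) = br (br x (F (take p ys))) (G (drop p ys))
      + br (F (take p ys)) (br x (G (drop p ys)))"
    unfolding comb_def by (rule leib)
  also have "br x (F (take p ys)) = (\<Sum>i<p. F ((take p ys)[i := br x (take p ys ! i)]))"
    using F len unfolding invariant_def by simp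
  also have "br x (G (drop p ys)) = (\<Sum>j<q. G ((drop p ys)[j := br x (drop p ys ! j)]))"
    using G len unfolding invariant_def by simp
  also have "br (\<Sum>i<p. F ((take p ys)[i := br x (take p ys ! i)])) (G (drop p ys))
     = (\<Sum>i<p. comb p F G (ys[i := br x (ys ! i)]))"
    by (auto simp: br_sum_left comb_def take_update_swap intro!: sum.cong)
  also have "br (F (take p ys)) (\<Sum>j<q. G ((drop p ys)[j := br x (drop p ys ! j)]))
     = (\<Sum>j<q. comb p F G (ys[p + j := br x (ys ! (p + j))]))"
    using len by (auto simp: br_sum_right comb_def drop_update_swap intro!: sum.cong)
  finally show "br x (comb p F G ys) = (\<Sum>i<p + q. comb p F G (ys[i := br x (ys ! i)]))"
    by (simp add: sum_lessThan_add_split)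
qed

end



lemma perm_lt: "\<sigma> permutes {..<n} \<Longrightarrow> j < n \<Longrightarrow> \<sigma> j < n"
  using permutes_in_image by fastforce

lemma perm_inv_lt: "\<sigma> permutes {..<n} \<Longrightarrow> j < n \<Longrightarrow> inv \<sigma> j < n"
  using perm_lt permutes_inv by blast

lemma perm_sub: "\<sigma> permutes {..<n::nat} \<Longrightarrow> n \<le> m \<Longrightarrow> \<sigma> permutes {..<m}"
  by (erule permutes_subset) (auto simp: subset_eq)

lemma permute_list_update:
  assumes "\<sigma> permutes {..<length zs}" "i < length zs"
  shows "permute_list \<sigma> (zs[i := v]) = (permute_list \<sigma> zs)[inv \<sigma> i := v]"
proof (rule nth_equalityI)
  show "length (permute_list \<sigma> (zs[i := v])) = length ((permute_list \<sigma> zs)[inv \<sigma> i := v])" by simp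
  fix j assume j: "j < length (permute_list \<sigma> (zs[i := v]))"
  then have j': "j < length zs" by simp
  have e: "j = inv \<sigma> i \<longleftrightarrow> \<sigma> j = i"
    using assms(1) by (metis permutes_inverses(1) permutes_inverses(2))
  have sj: "\<sigma> j < length zs" using assms(1) j' by (simp add: perm_lt)
  have "(permute_list \<sigma> zs)[inv \<sigma> i := v] ! j = (if \<sigma> j = i then v else zs ! \<sigma> j)"
    using e j' assms by (auto simp: nth_list_update permute_list_nth)
  moreover have "permute_list \<sigma> (zs[i := v]) ! j = (if \<sigma> j = i then v else zs ! \<sigma> j)"
    using j' sj assms by (auto simp: nth_list_update permute_list_nth)
  ultimately show "permute_list \<sigma> (zs[i := v]) ! j = (permute_list \<sigma> zs)[inv \<sigma> i := v] ! j"
    by simp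
qed

lemma permute_list_update':
  assumes "\<sigma> permutes {..<length zs}" "i < length zs"
  shows "(permute_list \<sigma> zs)[i := v] = permute_list \<sigma> (zs[\<sigma> i := v])"
proof -
  have "inv \<sigma> (\<sigma> i) = i" using assms(1) permutes_inverses(2) by fast
  moreover have "\<sigma> i < length zs" using assms by (simp add: perm_lt)
  ultimately show ?thesis using permute_list_update[OF assms(1), of "\<sigma> i" v] by simp
qed

lemma multilinear_permute:
  assumes "multilinear N F" "\<sigma> permutes {..<N}"
  shows "multilinear N (\<lambda>zs. F (permute_list \<sigma> zs))"
  by (rule multilinear_comp_list[where \<pi>="inv \<sigma>", OF assms(1)])
     (use assms(2) in \<open>auto simp: permute_list_update perm_inv_lt\<close>)

lemma invariant_permute:
  assumes F: "invariant br N F" and s: "\<sigma> permutes {..<N}"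
  shows "invariant br N (\<lambda>zs. F (permute_list \<sigma> zs))"
  unfolding invariant_def
proof (intro allI impI)
  fix x :: 'a and ys :: "'a list" assume len: "length ys = N"
  have "br x (F (permute_list \<sigma> ys)) =
      (\<Sum>i<N. F ((permute_list \<sigma> ys)[i := br x (permute_list \<sigma> ys ! i)]))"
    using F len unfolding invariant_def by simp
  also have "\<dots> = (\<Sum>i<N. F (permute_list \<sigma> (ys[\<sigma> i := br x (ys ! \<sigma> i)])))"
    using s len by (auto intro!: sum.cong simp: permute_list_update' permute_list_nth)
  also have "\<dots> = (\<Sum>j<N. F (permute_list \<sigma> (ys[j := br x (ys ! j)])))"
    using sum.permute[OF s, of "\<lambda>j. F (permute_list \<sigma> (ys[j := br x (ys ! j)]))"] by (simp add: o_def)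
  finally show "br x (F (permute_list \<sigma> ys)) = (\<Sum>i<N. F (permute_list \<sigma> (ys[i := br x (ys ! i)])))" .
qed

definition symz :: "nat \<Rightarrow> ('b list \<Rightarrow> 'a::real_vector) \<Rightarrow> 'b list \<Rightarrow> 'a" where
  "symz n F zs = (1 / fact n) *\<^sub>R (\<Sum>\<sigma>\<in>{\<sigma>. \<sigma> permutes {..<n}}. F (permute_list \<sigma> zs))"

lemma finite_perms: "finite {\<sigma>. \<sigma> permutes {..<n::nat}}"
  by (simp add: finite_permutations)

lemma multilinear_symz:
  assumes "multilinear N F" "n \<le> N"
  shows "multilinear N (symz n F)"
  unfolding symz_def
  by (intro multilinear_scale multilinear_sum finite_perms multilinear_permute[OF assms(1)])
     (use assms(2) in \<open>auto intro: permutes_subset\<close>)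

lemma (in L1) invariant_symz:
  assumes "invariant br N F" "n \<le> N"
  shows "invariant br N (symz n F)"
  unfolding symz_def
  by (intro invariant_scale invariant_sum finite_perms invariant_permute[OF assms(1)])
     (use assms(2) in \<open>auto intro: permutes_subset\<close>)

lemma permute_list_replicate_app:
  assumes "\<sigma> permutes {..<n}"
  shows "permute_list \<sigma> (replicate n x @ ys) = replicate n x @ ys"
proof (rule nth_equalityI)
  fix j assume "j < length (permute_list \<sigma> (replicate n x @ ys))"
  then have j: "j < n + length ys" by simp
  have s': "\<sigma> permutes {..<length (replicate n x @ ys)}"
    using assms by (auto intro: permutes_subset)
  show "permute_list \<sigma> (replicate n x @ ys) ! j = (replicate n x @ ys) ! j"
  proof (cases "j < n")
    case True
    then have "\<sigma> j < n" using assms by (simp add: perm_lt)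
    then show ?thesis using True j s' by (simp add: permute_list_nth nth_append)
  next
    case False
    then have "\<sigma> j = j" using assms by (simp add: permutes_not_in)
    then show ?thesis using j s' by (simp add: permute_list_nth)
  qed
qed simp

lemma card_perms: "card {\<sigma>. \<sigma> permutes {..<n::nat}} = fact n"
  by (simp add: card_permutations)

lemma symz_diag: "symz n F (replicate n x @ ys) = F (replicate n x @ ys)"
  unfolding symz_def by (simp add: permute_list_replicate_app card_perms sum_constant_scaleR)

lemma symz_sym:
  assumes "\<tau> permutes {..<n}" "n \<le> length zs"
  shows "symz n F (permute_list \<tau> zs) = symz n F zs"
proof -
  have "(\<Sum>\<sigma>\<in>{\<sigma>. \<sigma> permutes {..<n}}. F (permute_list \<sigma> (permute_list \<tau> zs)))
      = (\<Sum>\<sigma>\<in>{\<sigma>. \<sigma> permutes {..<n}}. F (permute_list (\<tau> \<circ> \<sigma>) zs))"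
    using assms by (auto intro!: sum.cong simp: permute_list_compose[symmetric] perm_sub)
  also have "\<dots> = (\<Sum>\<sigma>\<in>{\<sigma>. \<sigma> permutes {..<n}}. F (permute_list \<sigma> zs))"
    using setum_permutations_compose_left[OF assms(1), of "\<lambda>\<sigma>. F (permute_list \<sigma> zs)"] by simp
  finally show ?thesis unfolding symz_def by simp
qed

lemma permute_list_append_fix:
  assumes "\<sigma> permutes {..<length xs}"
  shows "permute_list \<sigma> xs @ ys = permute_list \<sigma> (xs @ ys)"
proof (rule nth_equalityI)
  fix j assume "j < length (permute_list \<sigma> xs @ ys)"
  then have j: "j < length xs + length ys" by simp
  have s': "\<sigma> permutes {..<length (xs @ ys)}" using assms by (auto intro: permutes_subset)
  show "(permute_list \<sigma> xs @ ys) ! j = permute_list \<sigma> (xs @ ys) ! j"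
  proof (cases "j < length xs")
    case True
    then have "\<sigma> j < length xs" using assms by (simp add: perm_lt)
    then show ?thesis using True j s' assms by (simp add: permute_list_nth nth_append)
  next
    case False
    then have "\<sigma> j = j" using assms by (simp add: permutes_not_in)
    then show ?thesis using j s' False by (simp add: permute_list_nth nth_append)
  qed
qed simp



lemma multilinear_cons:
  assumes "multilinear (Suc N) G"
  shows "multilinear N (\<lambda>zs. G (a # zs))"
  by (rule multilinear_comp_list[where \<pi>=Suc, OF assms]) auto

lemma linear_cons_head:
  assumes "multilinear (Suc N) G" "length zs = N"
  shows "linear (\<lambda>v. G (v # zs))"
proof -
  have "linear (\<lambda>v. G ((a # zs)[0 := v]))" for a
    using assms unfolding multilinear_def by (metis length_Cons zero_less_Suc)
  then show ?thesis by simp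
qed

lemma poly_expand:
  fixes G :: "'b::real_vector list \<Rightarrow> 'a::real_vector"
  assumes "multilinear N G"
  shows "\<exists>c. (\<forall>t. G (replicate N (x + t *\<^sub>R y)) = (\<Sum>j\<le>N. t ^ j *\<^sub>R c j))
           \<and> c 1 = (\<Sum>i<N. G ((replicate N x)[i := y])) \<and> c 0 = G (replicate N x)"
  using assms
proof (induction N arbitrary: G)
  case 0
  show ?case by (rule exI[of _ "\<lambda>j. if j = 0 then G [] else 0"]) simp
next
  case (Suc N)
  obtain c1 where c1: "\<forall>t. G (x # replicate N (x + t *\<^sub>R y)) = (\<Sum>j\<le>N. t ^ j *\<^sub>R c1 j)"
      "c1 1 = (\<Sum>i<N. G (x # (replicate N x)[i := y]))" "c1 0 = G (x # replicate N x)"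
    using Suc.IH[OF multilinear_cons[OF Suc.prems, of x]] by auto
  obtain c2 where c2: "\<forall>t. G (y # replicate N (x + t *\<^sub>R y)) = (\<Sum>j\<le>N. t ^ j *\<^sub>R c2 j)"
      "c2 0 = G (y # replicate N x)"
    using Suc.IH[OF multilinear_cons[OF Suc.prems, of y]] by auto
  define c where "c j = (if j \<le> N then c1 j else 0) + (if j = 0 then 0 else c2 (j - 1))" for j
  have c11: "c1 1 = (if 1 \<le> N then c1 1 else 0)" using c1(2) by (cases N) auto
  show ?case
  proof (intro exI[of _ c] conjI allI)
    fix t :: real
    have lin: "linear (\<lambda>v. G (v # replicate N (x + t *\<^sub>R y)))"
      by (rule linear_cons_head[OF Suc.prems]) simp
    have "G (replicate (Suc N) (x + t *\<^sub>R y)) = G (x # replicate N (x + t *\<^sub>R y)) + t *\<^sub>R G (y # replicate N (x + t *\<^sub>R y))"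
      using linear_add[OF lin] linear_scale[OF lin] by simp
    also have "\<dots> = (\<Sum>j\<le>N. t ^ j *\<^sub>R c1 j) + t *\<^sub>R (\<Sum>j\<le>N. t ^ j *\<^sub>R c2 j)"
      using c1 c2 by simp
    also have "\<dots> = (\<Sum>j\<le>Suc N. t ^ j *\<^sub>R c j)"
    proof -
      have s1: "(\<Sum>j\<le>Suc N. t^j *\<^sub>R (if j \<le> N then c1 j else 0)) = (\<Sum>j\<le>N. t^j *\<^sub>R c1 j)"
        by (simp add: sum.atMost_Suc)
      have s2: "(\<Sum>j\<le>Suc N. t^j *\<^sub>R (if j = 0 then 0 else c2 (j-1))) = t *\<^sub>R (\<Sum>j\<le>N. t^j *\<^sub>R c2 j)"
        by (simp add: sum.atMost_Suc_shift scaleR_sum_right del: sum.atMost_Suc)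
      show ?thesis unfolding c_def scaleR_add_right sum.distrib s1 s2 ..
    qed
    finally show "G (replicate (Suc N) (x + t *\<^sub>R y)) = (\<Sum>j\<le>Suc N. t ^ j *\<^sub>R c j)" .
  next
    have "c 1 = c1 1 + c2 0" unfolding c_def using c11 by simp
    also have "\<dots> = (\<Sum>i<Suc N. G ((replicate (Suc N) x)[i := y]))"
    proof -
      have "(\<Sum>i<Suc N. G ((replicate (Suc N) x)[i := y])) = G (y # replicate N x) + (\<Sum>i<N. G (x # (replicate N x)[i := y]))"
        by (subst sum.lessThan_Suc_shift) simp
      then show ?thesis using c1(2) c2(2) by simp
    qed
    finally show "c 1 = (\<Sum>i<Suc N. G ((replicate (Suc N) x)[i := y]))" .
  next
    show "c 0 = G (replicate (Suc N) x)" using c1(3) by (simp add: c_def)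
  qed
qed

lemma coeff_zero:
  fixes c :: "nat \<Rightarrow> 'a::euclidean_space"
  assumes "\<forall>t::real. (\<Sum>j\<le>N. t ^ j *\<^sub>R c j) = 0" "j \<le> N"
  shows "c j = 0"
proof (rule euclidean_eqI)
  fix b :: 'a assume b: "b \<in> Basis"
  have "\<forall>t::real. (\<Sum>j\<le>N. (c j \<bullet> b) * t ^ j) = 0"
  proof
    fix t :: real
    have "(\<Sum>j\<le>N. (c j \<bullet> b) * t ^ j) = (\<Sum>j\<le>N. t ^ j *\<^sub>R c j) \<bullet> b"
      by (simp add: inner_sum_left mult.commute)
    then show "(\<Sum>j\<le>N. (c j \<bullet> b) * t ^ j) = 0" using assms(1) by simp
  qed
  then have "\<forall>i\<le>N. c i \<bullet> b = 0" using polyfun_eq_0[of "\<lambda>j. c j \<bullet> b" N] by blast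
  then show "c j \<bullet> b = 0 \<bullet> b" using assms(2) by simp
qed

lemma replicate_update_perm:
  assumes "i \<le> N"
  shows "(replicate (Suc N) x)[i := y] = permute_list (Transposition.transpose i N) (replicate N x @ [y])"
proof (rule nth_equalityI)
  fix j assume "j < length ((replicate (Suc N) x)[i := y])"
  then have j: "j < Suc N" by (metis length_list_update length_replicate)
  have s: "Transposition.transpose i N permutes {..<length (replicate N x @ [y])}"
    using assms by (intro permutes_swap_id) auto
  have l: "(replicate (Suc N) x)[i := y] ! j = (if j = i then y else x)"
    using j by (simp add: nth_list_update del: replicate_Suc)
  have tl: "Transposition.transpose i N j \<le> N" using j assms by (simp add: Transposition.transpose_def)
  have r: "(replicate N x @ [y]) ! k = (if k = N then y else x)" if "k \<le> N" for k
    using that by (auto simp: nth_append)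
  have "permute_list (Transposition.transpose i N) (replicate N x @ [y]) ! j
      = (replicate N x @ [y]) ! (Transposition.transpose i N j)"
    using j s by (simp add: permute_list_nth)
  also have "\<dots> = (if j = i then y else x)" using r[OF tl] j assms by (auto simp: Transposition.transpose_def)
  finally show "(replicate (Suc N) x)[i := y] ! j = permute_list (Transposition.transpose i N) (replicate N x @ [y]) ! j"
    using l by simp
qed (simp del: replicate_Suc)

lemma polarization:
  fixes G :: "'b::real_vector list \<Rightarrow> 'a::euclidean_space"
  assumes "multilinear N G" "symmetric_map N G" "\<And>x. G (replicate N x) = 0" "length zs = N"
  shows "G zs = 0"
  using assms
proof (induction N arbitrary: G zs)
  case 0
  then show ?case by (metis replicate_0 length_0_conv)
next
  case (Suc N)
  obtain xs y where zs: "zs = xs @ [y]" and lxs: "length xs = N"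
    using Suc.prems(4) by (metis length_Suc_conv_rev)
  define H where "H ws = G (ws @ [y])" for ws
  have mH: "multilinear N H" unfolding H_def
    by (rule multilinear_comp_list[where \<pi>=id, OF Suc.prems(1)]) (auto simp: list_update_append1)
  have sH: "symmetric_map N H" unfolding symmetric_map_def H_def
  proof (intro allI impI)
    fix ws :: "'b list" and \<sigma> assume a: "length ws = N \<and> \<sigma> permutes {..<N}"
    then have "permute_list \<sigma> ws @ [y] = permute_list \<sigma> (ws @ [y])"
      by (intro permute_list_append_fix) simp
    moreover have "\<sigma> permutes {..<Suc N}" using perm_sub[of \<sigma> N "Suc N"] a by simp
    ultimately show "G (permute_list \<sigma> ws @ [y]) = G (ws @ [y])"
      using Suc.prems(2) a unfolding symmetric_map_def by simp
  qed
  have dH: "H (replicate N x) = 0" for x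
  proof -
    obtain c where c: "\<forall>t. G (replicate (Suc N) (x + t *\<^sub>R y)) = (\<Sum>j\<le>Suc N. t ^ j *\<^sub>R c j)"
        "c 1 = (\<Sum>i<Suc N. G ((replicate (Suc N) x)[i := y]))"
      using poly_expand[OF Suc.prems(1), of x y] by auto
    have "c 1 = 0" by (rule coeff_zero[where N="Suc N"]) (use c(1) Suc.prems(3) in auto)
    have gi: "G ((replicate (Suc N) x)[i := y]) = H (replicate N x)" if "i < Suc N" for i
    proof -
      have "Transposition.transpose i N permutes {..<Suc N}" using that by (intro permutes_swap_id) auto
      then show ?thesis using replicate_update_perm[of i N x y] that Suc.prems(2)
        unfolding symmetric_map_def H_def by simp
    qed
    have e: "(\<Sum>i<Suc N. G ((replicate (Suc N) x)[i := y])) = (\<Sum>i<Suc N. H (replicate N x))"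
      by (rule sum.cong[OF refl]) (use gi in blast)
    have "c 1 = real (Suc N) *\<^sub>R H (replicate N x)" using c(2) e by (simp only: sum_constant_scaleR card_lessThan)
    then show ?thesis using \<open>c 1 = 0\<close> by simp
  qed
  show ?case using Suc.IH[OF mH sH dH lxs] zs H_def by simp
qed



lemma tri_sum:
  fixes h :: "nat \<Rightarrow> nat \<Rightarrow> 'a::comm_monoid_add"
  shows "(\<Sum>i\<le>n. \<Sum>j\<le>n-i. h i j) = (\<Sum>(i,j)\<in>{(i,j). i+j \<le> n}. h i j)"
proof -
  have "(\<Sum>i\<le>n. \<Sum>j\<le>n-i. h i j) = (\<Sum>(i,j)\<in>Sigma {..n} (\<lambda>i. {..n-i}). h i j)"
    by (rule sum.Sigma) auto
  also have "Sigma {..n} (\<lambda>i. {..n-i}) = {(i,j). i+j \<le> n}" by auto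
  finally show ?thesis .
qed

lemma tri_swap:
  fixes h :: "nat \<Rightarrow> nat \<Rightarrow> 'a::comm_monoid_add"
  shows "(\<Sum>i\<le>n. \<Sum>j\<le>n-i. h i j) = (\<Sum>j\<le>n. \<Sum>i\<le>n-j. h i j)"
proof -
  have "(\<Sum>j\<le>n. \<Sum>i\<le>n-j. h i j) = (\<Sum>(j,i)\<in>{(j,i). j+i \<le> n}. h i j)"
    by (rule tri_sum)
  also have "\<dots> = (\<Sum>(i,j)\<in>{(i,j). i+j \<le> n}. h i j)"
    by (rule sum.reindex_bij_witness[where i=prod.swap and j=prod.swap]) auto
  finally show ?thesis by (simp add: tri_sum)
qed

lemma tri_assoc:
  fixes g :: "nat \<Rightarrow> nat \<Rightarrow> nat \<Rightarrow> 'a::comm_monoid_add"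
  shows "(\<Sum>p\<le>n. \<Sum>i\<le>p. g i (p - i) (n - p)) = (\<Sum>i\<le>n. \<Sum>j\<le>n-i. g i j (n - i - j))"
proof -
  have "(\<Sum>p\<le>n. \<Sum>i\<le>p. g i (p - i) (n - p)) = (\<Sum>p\<le>n. \<Sum>i\<le>p. g i (p - i) (n - i - (p - i)))"
    by (intro sum.cong refl) auto
  also have "\<dots> = (\<Sum>(i,j)\<in>{(i,j). i+j \<le> n}. g i j (n - i - j))"
    using sum.triangle_reindex_eq[of "\<lambda>i j. g i j (n - i - j)" n] by simp
  finally show ?thesis by (simp add: tri_sum)
qed

context L1
begin

definition brs :: "(nat \<Rightarrow> 'a) \<Rightarrow> (nat \<Rightarrow> 'a) \<Rightarrow> nat \<Rightarrow> 'a" where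
  "brs u v n = (\<Sum>i\<le>n. br (u i) (v (n - i)))"

definition Dpow :: "(nat \<Rightarrow> 'a) \<Rightarrow> nat \<Rightarrow> (nat \<Rightarrow> 'a) \<Rightarrow> nat \<Rightarrow> 'a" where
  "Dpow d k u = (brs d ^^ k) u"

definition Ex :: "(nat \<Rightarrow> 'a) \<Rightarrow> (nat \<Rightarrow> 'a) \<Rightarrow> nat \<Rightarrow> 'a" where
  "Ex d u n = (\<Sum>k\<le>n. (1 / fact k) *\<^sub>R Dpow d k u n)"

lemma Dpow_0[simp]: "Dpow d 0 u = u" by (simp add: Dpow_def)
lemma Dpow_Suc: "Dpow d (Suc k) u = brs d (Dpow d k u)" by (simp add: Dpow_def)

lemma brs_sum_right: "brs d (\<lambda>m. \<Sum>j\<in>J. f j m) n = (\<Sum>j\<in>J. brs d (f j) n)"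
  unfolding brs_def by (simp add: br_sum_right) (rule sum.swap)

lemma brs_sum_left: "brs (\<lambda>m. \<Sum>j\<in>J. f j m) d n = (\<Sum>j\<in>J. brs (f j) d n)"
  unfolding brs_def by (simp add: br_sum_left) (rule sum.swap)

lemma brs_scale_right: "brs d (\<lambda>m. c *\<^sub>R f m) n = c *\<^sub>R brs d f n"
  unfolding brs_def by (simp add: scaleR_sum_right)

lemma brs_scale_left: "brs (\<lambda>m. c *\<^sub>R f m) d n = c *\<^sub>R brs f d n"
  unfolding brs_def by (simp add: scaleR_sum_right)

lemma brs_leibniz: "brs d (brs u v) n = brs (brs d u) v n + brs u (brs d v) n"
proof -
  have "brs d (brs u v) n = (\<Sum>i\<le>n. \<Sum>j\<le>n-i. br (br (d i) (u j)) (v (n - i - j)))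
      + (\<Sum>i\<le>n. \<Sum>j\<le>n-i. br (u j) (br (d i) (v (n - i - j))))"
  proof -
    have l: "br (d i) (br (u j) (v k)) = br (br (d i) (u j)) (v k) + br (u j) (br (d i) (v k))" for i j k
      by (rule leib)
    show ?thesis unfolding brs_def br_sum_right by (simp only: l sum.distrib diff_diff_left)
  qed
  also have "(\<Sum>i\<le>n. \<Sum>j\<le>n-i. br (br (d i) (u j)) (v (n - i - j))) = brs (brs d u) v n"
    unfolding brs_def br_sum_left using tri_assoc[of "\<lambda>i j k. br (br (d i) (u j)) (v k)" n] by simp
  also have "(\<Sum>i\<le>n. \<Sum>j\<le>n-i. br (u j) (br (d i) (v (n - i - j)))) = brs u (brs d v) n"
    unfolding brs_def br_sum_right using tri_swap[of "\<lambda>i j. br (u j) (br (d i) (v (n - i - j)))" n]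
    by (simp add: diff_commute add.commute)
  finally show ?thesis .
qed

lemma Dpow_low: "d 0 = 0 \<Longrightarrow> i < k \<Longrightarrow> Dpow d k u i = 0"
proof (induction k arbitrary: i)
  case 0 then show ?case by simp
next
  case (Suc k)
  have "br (d j) (Dpow d k u (i - j)) = 0" if "j \<le> i" for j
    using Suc that by (cases j) auto
  then show ?case by (simp add: Dpow_Suc brs_def)
qed

end



context L1
begin

definition Uf :: "(nat \<Rightarrow> 'a) \<Rightarrow> (nat \<Rightarrow> 'a) \<Rightarrow> nat \<Rightarrow> nat \<Rightarrow> 'a" where
  "Uf d u j = (\<lambda>m. (1 / fact j) *\<^sub>R Dpow d j u m)"

lemma brs_Uf: "brs d (Uf d u j) n = real (Suc j) *\<^sub>R Uf d u (Suc j) n"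
proof -
  have "brs d (Uf d u j) n = (1 / fact j) *\<^sub>R Dpow d (Suc j) u n"
    unfolding Uf_def brs_scale_right Dpow_Suc ..
  also have "(1 / fact j) = real (Suc j) * (1 / fact (Suc j) :: real)"
    by (simp add: fact_Suc del: of_nat_Suc)
  finally show ?thesis by (simp add: Uf_def)
qed

lemma exp_mult_k:
  "(1 / fact k) *\<^sub>R Dpow d k (brs u v) n = (\<Sum>j\<le>k. brs (Uf d u j) (Uf d v (k - j)) n)"
proof (induction k arbitrary: n)
  case 0
  then show ?case by (simp add: Uf_def)
next
  case (Suc k)
  define f where "f a b = brs (Uf d u a) (Uf d v b) n" for a b
  have "(1 / fact (Suc k)) *\<^sub>R Dpow d (Suc k) (brs u v) n
      = (1 / real (Suc k)) *\<^sub>R brs d (\<lambda>m. (1 / fact k) *\<^sub>R Dpow d k (brs u v) m) n"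
    by (simp add: Dpow_Suc brs_scale_right)
  also have "\<dots> = (1 / real (Suc k)) *\<^sub>R (\<Sum>j\<le>k. brs d (brs (Uf d u j) (Uf d v (k - j))) n)"
    by (simp only: Suc.IH brs_sum_right)
  also have "(\<Sum>j\<le>k. brs d (brs (Uf d u j) (Uf d v (k - j))) n)
      = (\<Sum>j\<le>k. real (Suc j) *\<^sub>R f (Suc j) (k - j)) + (\<Sum>j\<le>k. real (Suc (k - j)) *\<^sub>R f j (Suc k - j))"
  proof -
    have bU: "brs d (Uf d w i) = (\<lambda>m. real (Suc i) *\<^sub>R Uf d w (Suc i) m)" for w i
      by (rule ext) (rule brs_Uf)
    have A: "brs (brs d (Uf d u j)) (Uf d v (k - j)) n = real (Suc j) *\<^sub>R f (Suc j) (k - j)" for j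
      by (simp only: bU brs_scale_left f_def)
    have B: "brs (Uf d u j) (brs d (Uf d v (k - j))) n = real (Suc (k - j)) *\<^sub>R f j (Suc k - j)" if "j \<le> k" for j
      by (simp only: bU brs_scale_right f_def Suc_diff_le[OF that])
    have "brs d (brs (Uf d u j) (Uf d v (k - j))) n = real (Suc j) *\<^sub>R f (Suc j) (k - j) + real (Suc (k - j)) *\<^sub>R f j (Suc k - j)"
      if "j \<le> k" for j
      by (simp only: brs_leibniz[of d "Uf d u j" "Uf d v (k - j)" n] A B[OF that])
    then show ?thesis by (simp add: sum.distrib)
  qed
  also have "(\<Sum>j\<le>k. real (Suc j) *\<^sub>R f (Suc j) (k - j)) = (\<Sum>j\<le>Suc k. real j *\<^sub>R f j (Suc k - j))"
    by (simp add: sum.atMost_Suc_shift del: sum.atMost_Suc)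
  also have "(\<Sum>j\<le>k. real (Suc (k - j)) *\<^sub>R f j (Suc k - j)) = (\<Sum>j\<le>Suc k. (real (Suc k) - real j) *\<^sub>R f j (Suc k - j))"
  proof -
    have "real (Suc (k - j)) = real (Suc k) - real j" if "j \<le> k" for j using that by (simp add: of_nat_diff)
    then show ?thesis by (simp add: sum.atMost_Suc del: of_nat_Suc)
  qed
  also have "(\<Sum>j\<le>Suc k. real j *\<^sub>R f j (Suc k - j)) + (\<Sum>j\<le>Suc k. (real (Suc k) - real j) *\<^sub>R f j (Suc k - j))
      = real (Suc k) *\<^sub>R (\<Sum>j\<le>Suc k. f j (Suc k - j))"
    by (simp add: sum.distrib[symmetric] scaleR_sum_right scaleR_add_left[symmetric] del: of_nat_Suc sum.atMost_Suc)
  finally show ?case by (simp add: f_def)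
qed

lemma Uf_low: "d 0 = 0 \<Longrightarrow> i < j \<Longrightarrow> Uf d u j i = 0"
  by (simp add: Uf_def Dpow_low)

lemma Ex_Uf: "d 0 = 0 \<Longrightarrow> i \<le> n \<Longrightarrow> Ex d u i = (\<Sum>k\<le>n. Uf d u k i)"
  unfolding Ex_def Uf_def
  by (rule sum.mono_neutral_left) (auto simp: Dpow_low)

lemma Ex_mult:
  assumes d0: "d 0 = 0"
  shows "Ex d (brs u v) n = brs (Ex d u) (Ex d v) n"
proof -
  define F where "F j m = brs (Uf d u j) (Uf d v m) n" for j m
  have Fz: "F j m = 0" if "n < j + m" for j m
    unfolding F_def brs_def
  proof (rule sum.neutral, intro ballI)
    fix i assume "i \<in> {..n}"
    show "br (Uf d u j i) (Uf d v m (n - i)) = 0"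
    proof (cases "i < j")
      case True then show ?thesis using Uf_low[of d, OF d0] by simp
    next
      case False then have "n - i < m" using that \<open>i \<in> {..n}\<close> by auto
      then show ?thesis using Uf_low[of d, OF d0] by simp
    qed
  qed
  have "Ex d (brs u v) n = (\<Sum>k\<le>n. \<Sum>j\<le>k. F j (k - j))"
    unfolding Ex_def F_def by (simp add: exp_mult_k)
  also have "\<dots> = (\<Sum>(j,m)\<in>{(j,m). j+m \<le> n}. F j m)"
    using sum.triangle_reindex_eq[of F n] by simp
  also have "\<dots> = (\<Sum>j\<le>n. \<Sum>m\<le>n-j. F j m)" by (simp add: tri_sum)
  also have "\<dots> = (\<Sum>j\<le>n. \<Sum>m\<le>n. F j m)"
  proof (rule sum.cong[OF refl])
    fix j assume "j \<in> {..n}"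
    show "sum (F j) {..n-j} = sum (F j) {..n}"
      by (rule sum.mono_neutral_left) (auto intro!: Fz)
  qed
  also have "\<dots> = brs (Ex d u) (Ex d v) n"
  proof -
    have "brs (Ex d u) (Ex d v) n = (\<Sum>i\<le>n. br (\<Sum>j\<le>n. Uf d u j i) (\<Sum>m\<le>n. Uf d v m (n - i)))"
      unfolding brs_def by (intro sum.cong refl) (simp add: Ex_Uf[of d, OF d0, of _ n])
    also have "\<dots> = (\<Sum>i\<le>n. \<Sum>j\<le>n. \<Sum>m\<le>n. br (Uf d u j i) (Uf d v m (n - i)))"
      by (simp add: br_sum_left br_sum_right) (rule sum.cong[OF refl], rule sum.swap)
    also have "\<dots> = (\<Sum>j\<le>n. \<Sum>i\<le>n. \<Sum>m\<le>n. br (Uf d u j i) (Uf d v m (n - i)))"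
      by (rule sum.swap)
    also have "\<dots> = (\<Sum>j\<le>n. \<Sum>m\<le>n. \<Sum>i\<le>n. br (Uf d u j i) (Uf d v m (n - i)))"
      by (rule sum.cong[OF refl], rule sum.swap)
    also have "\<dots> = (\<Sum>j\<le>n. \<Sum>m\<le>n. F j m)"
      by (simp add: F_def brs_def)
    finally show ?thesis by simp
  qed
  finally show ?thesis .
qed

end



definition lsets :: "nat \<Rightarrow> nat \<Rightarrow> nat list set" where
  "lsets k n = {ls. length ls = k \<and> (\<forall>l\<in>set ls. 2 \<le> l) \<and> sum_list ls \<le> n}"

lemma finite_lsets: "finite (lsets k n)"
proof (rule finite_subset)
  show "lsets k n \<subseteq> {xs. set xs \<subseteq> {..n} \<and> length xs = k}"
    unfolding lsets_def using member_le_sum_list by fastforce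
qed (rule finite_lists_length_eq, simp)

lemma lsets_0: "lsets 0 n = {[]}" by (auto simp: lsets_def)

lemma two_len_le_sum: "(\<forall>l\<in>set ls. 2 \<le> l) \<Longrightarrow> 2 * length ls \<le> sum_list (ls :: nat list)"
  by (induction ls) auto

lemma lsets_empty: "n div 2 < k \<Longrightarrow> lsets k n = {}"
  unfolding lsets_def using two_len_le_sum by fastforce

lemma lsets_Suc: "lsets (Suc k) n = (\<lambda>(i, ls). i # ls) ` (SIGMA i:{2..n}. lsets k (n - i))"
  unfolding lsets_def
  by (auto simp: length_Suc_conv image_iff)

lemma lsets_lt:
  assumes "ls \<in> lsets k n" "ls \<noteq> [n]" "l \<in> set ls"
  shows "l < n"
proof (rule ccontr)
  assume "\<not> l < n"
  obtain as bs where ls: "ls = as @ l # bs" using assms(3) by (metis split_list)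
  have all: "\<forall>l\<in>set ls. 2 \<le> l" and s: "sum_list ls \<le> n" using assms(1) by (auto simp: lsets_def)
  have "sum_list as + l + sum_list bs \<le> n" using s ls by simp
  then have sa: "sum_list as = 0" and sb: "sum_list bs = 0" using \<open>\<not> l < n\<close> by linarith+
  have "as = []"
  proof (rule ccontr)
    assume "as \<noteq> []" then obtain a where a: "a \<in> set as" by (cases as) auto
    then have "a \<le> sum_list as" by (simp add: member_le_sum_list)
    moreover have "2 \<le> a" using all a ls by auto
    ultimately show False using sa by simp
  qed
  have "bs = []"
  proof (rule ccontr)
    assume "bs \<noteq> []" then obtain a where a: "a \<in> set bs" by (cases bs) auto
    then have "a \<le> sum_list bs" by (simp add: member_le_sum_list)
    moreover have "2 \<le> a" using all a ls by auto
    ultimately show False using sb by simp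
  qed
  then show False using \<open>as = []\<close> \<open>bs = []\<close> assms(2) ls \<open>\<not> l < n\<close> \<open>sum_list as + l + sum_list bs \<le> n\<close> by simp
qed

context L1
begin

definition LF :: "(nat \<Rightarrow> 'a) \<Rightarrow> (nat \<Rightarrow> 'a) \<Rightarrow> nat \<Rightarrow> 'a" where
  "LF d u n = (\<Sum>k\<le>n. (1 / fact k) *\<^sub>R (\<Sum>ls\<in>lsets k n. foldr br (map d ls) (u (n - sum_list ls))))"

lemma Dpow_list:
  assumes d0: "d 0 = 0" and d1: "d 1 = 0"
  shows "Dpow d k u n = (\<Sum>ls\<in>lsets k n. foldr br (map d ls) (u (n - sum_list ls)))"
proof (induction k arbitrary: n)
  case 0
  then show ?case by (simp add: lsets_0)
next
  case (Suc k)
  have "Dpow d (Suc k) u n = (\<Sum>i\<le>n. br (d i) (Dpow d k u (n - i)))"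
    by (simp add: Dpow_Suc brs_def)
  also have "\<dots> = (\<Sum>i\<in>{2..n}. br (d i) (Dpow d k u (n - i)))"
  proof (rule sum.mono_neutral_right)
    show "\<forall>i\<in>{..n} - {2..n}. br (d i) (Dpow d k u (n - i)) = 0"
      using d0 d1 by (auto simp: not_le less_2_cases_iff)
  qed auto
  also have "\<dots> = (\<Sum>i\<in>{2..n}. \<Sum>ls\<in>lsets k (n - i). foldr br (map d (i # ls)) (u (n - sum_list (i # ls))))"
    by (simp add: Suc.IH br_sum_right diff_diff_add)
  also have "\<dots> = (\<Sum>(i, ls)\<in>(SIGMA i:{2..n}. lsets k (n - i)). foldr br (map d (i # ls)) (u (n - sum_list (i # ls))))"
    by (rule sum.Sigma) (auto simp: finite_lsets)
  also have "\<dots> = (\<Sum>ls\<in>lsets (Suc k) n. foldr br (map d ls) (u (n - sum_list ls)))"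
    unfolding lsets_Suc by (subst sum.reindex) (auto simp: inj_on_def case_prod_beta)
  finally show ?case .
qed

lemma Ex_LF: "d 0 = 0 \<Longrightarrow> d 1 = 0 \<Longrightarrow> Ex d u n = LF d u n"
  unfolding Ex_def LF_def by (simp add: Dpow_list)

lemma LF_cong:
  assumes "\<And>l. 2 \<le> l \<Longrightarrow> l \<le> n \<Longrightarrow> d l = d' l"
  shows "LF d u n = LF d' u n"
proof -
  have feq: "foldr br (map d ls) (u (n - sum_list ls)) = foldr br (map d' ls) (u (n - sum_list ls))"
    if "ls \<in> lsets k n" for k ls
  proof -
    have "map d ls = map d' ls"
      using that assms member_le_sum_list[of _ ls] by (auto simp: lsets_def) (metis le_trans)
    then show ?thesis by (simp only:)
  qed
  show ?thesis unfolding LF_def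
    by (rule sum.cong[OF refl], rule arg_cong[where f="scaleR _"], rule sum.cong[OF refl], erule feq)
qed

lemma LF_diff:
  assumes "\<And>l. 2 \<le> l \<Longrightarrow> l < n \<Longrightarrow> d l = d' l" and n: "2 \<le> n"
  shows "LF d u n = LF d' u n + br (d n - d' n) (u 0)"
proof -
  define \<Delta> where "\<Delta> = br (d n - d' n) (u 0)"
  have "foldr br (map d ls) (u (n - sum_list ls)) - foldr br (map d' ls) (u (n - sum_list ls))
      = (if ls = [n] then \<Delta> else 0)" if "ls \<in> lsets k n" for k ls
  proof (cases "ls = [n]")
    case True then show ?thesis by (simp add: \<Delta>_def)
  next
    case False
    have "map d ls = map d' ls"
      using lsets_lt[OF that False] assms(1) that by (auto simp: lsets_def)
    then have "foldr br (map d ls) (u (n - sum_list ls)) = foldr br (map d' ls) (u (n - sum_list ls))"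
      by (simp only:)
    then show ?thesis using False by simp
  qed
  then have "LF d u n - LF d' u n = (\<Sum>k\<le>n. (1 / fact k) *\<^sub>R (\<Sum>ls\<in>lsets k n. if ls = [n] then \<Delta> else 0))"
    unfolding LF_def by (simp add: sum_subtractf[symmetric] scaleR_diff_right[symmetric])
  also have "\<dots> = (\<Sum>k\<le>n. if k = 1 then \<Delta> else 0)"
  proof (rule sum.cong[OF refl])
    fix k assume "k \<in> {..n}"
    have "[n] \<in> lsets 1 n" using n by (auto simp: lsets_def)
    moreover have "[n] \<in> lsets k n \<Longrightarrow> k = 1" by (auto simp: lsets_def)
    ultimately have "[n] \<in> lsets k n \<longleftrightarrow> k = 1" by blast
    moreover have "(\<Sum>ls\<in>lsets k n. if ls = [n] then \<Delta> else 0) = (if [n] \<in> lsets k n then \<Delta> else 0)"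
      by (rule sum.delta[OF finite_lsets])
    ultimately show "(1 / fact k) *\<^sub>R (\<Sum>ls\<in>lsets k n. if ls = [n] then \<Delta> else 0) = (if k = 1 then \<Delta> else 0)"
      by simp
  qed
  also have "\<dots> = \<Delta>" using n by (simp add: sum.delta)
  finally show ?thesis unfolding \<Delta>_def by (simp add: algebra_simps)
qed

definition Xs :: "'a \<Rightarrow> nat \<Rightarrow> 'a" where "Xs x i = (if i = 1 then x else 0)"
definition D0 :: "'a \<Rightarrow> nat \<Rightarrow> 'a" where "D0 y i = (if i = 0 then y else 0)"

lemma brs_D0: "brs (D0 y) (D0 z) n = D0 (br y z) n"
  unfolding brs_def D0_def by (cases n) auto

lemma Dpow_Xs: "Dpow (Xs x) k (D0 y) n = (if n = k then (br x ^^ k) y else 0)"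
proof (induction k arbitrary: n)
  case 0 then show ?case by (simp add: D0_def)
next
  case (Suc k)
  have "Dpow (Xs x) (Suc k) (D0 y) n = (\<Sum>i\<le>n. br (Xs x i) (Dpow (Xs x) k (D0 y) (n - i)))"
    by (simp add: Dpow_Suc brs_def)
  also have "\<dots> = (\<Sum>i\<le>n. if i = 1 then br x (Dpow (Xs x) k (D0 y) (n - 1)) else 0)"
    by (rule sum.cong) (auto simp: Xs_def)
  also have "\<dots> = (if n = Suc k then (br x ^^ Suc k) y else 0)"
    using Suc by (cases n) (auto simp: sum.delta)
  finally show ?case .
qed

lemma Ex_Xs: "Ex (Xs x) (D0 y) n = (1 / fact n) *\<^sub>R (br x ^^ n) y"
  unfolding Ex_def Dpow_Xs by (simp add: if_distrib sum.delta cong: if_cong)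

end



lemma span_image_rep:
  assumes "finite I" "v \<in> span (w ` I)"
  shows "\<exists>u. v = (\<Sum>p\<in>I. u p *\<^sub>R w p)"
  using assms(2)
proof (induction rule: span_induct_alt)
  case base
  show ?case by (rule exI[of _ "\<lambda>_. 0"]) simp
next
  case (step c x y)
  obtain u where u: "y = (\<Sum>p\<in>I. u p *\<^sub>R w p)" using step by blast
  obtain p0 where p0: "p0 \<in> I" "x = w p0" using step by blast
  have e: "(u p + (if p = p0 then c else 0)) *\<^sub>R w p = u p *\<^sub>R w p + (if p = p0 then c *\<^sub>R w p else 0)" for p
    by (simp add: scaleR_add_left)
  have "(\<Sum>p\<in>I. (u p + (if p = p0 then c else 0)) *\<^sub>R w p)
      = (\<Sum>p\<in>I. u p *\<^sub>R w p) + (\<Sum>p\<in>I. if p = p0 then c *\<^sub>R w p else 0)"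
    by (simp only: e sum.distrib)
  also have "(\<Sum>p\<in>I. if p = p0 then c *\<^sub>R w p else 0) = c *\<^sub>R w p0"
    using p0(1) assms(1) by (simp add: sum.delta')
  finally have "c *\<^sub>R x + y = (\<Sum>p\<in>I. (u p + (if p = p0 then c else 0)) *\<^sub>R w p)"
    using p0 u by simp
  then show ?case by (rule exI[where x="\<lambda>p. u p + (if p = p0 then c else 0)"])
qed

lemma permute_list_replicate:
  "\<sigma> permutes {..<m} \<Longrightarrow> permute_list \<sigma> (replicate m x) = replicate m x"
  using permute_list_replicate_app[of \<sigma> m x "[]"] by simp

lemma permute_list_inv_cancel:
  assumes "\<sigma> permutes {..<length ls}"
  shows "permute_list (inv \<sigma>) (permute_list \<sigma> ls) = ls" "permute_list \<sigma> (permute_list (inv \<sigma>) ls) = ls"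
proof -
  have i: "inv \<sigma> permutes {..<length ls}" using assms by (rule permutes_inv)
  show "permute_list (inv \<sigma>) (permute_list \<sigma> ls) = ls"
    using permute_list_compose[of "inv \<sigma>" ls \<sigma>] i assms by (simp add: permutes_inv_o)
  show "permute_list \<sigma> (permute_list (inv \<sigma>) ls) = ls"
    using permute_list_compose[of \<sigma> ls "inv \<sigma>"] i assms by (simp add: permutes_inv_o)
qed

lemma sum_list_permute:
  fixes ls :: "nat list"
  assumes "\<sigma> permutes {..<length ls}" shows "sum_list (permute_list \<sigma> ls) = sum_list ls"
proof -
  have "mset (permute_list \<sigma> ls) = mset ls" using assms by (rule mset_permute_list)
  then have "sum_mset (mset (permute_list \<sigma> ls)) = sum_mset (mset ls)" by simp
  then show ?thesis by (simp only: sum_mset_sum_list)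
qed

lemma lsets_permute:
  assumes "\<sigma> permutes {..<k}" "ls \<in> lsets k n"
  shows "permute_list \<sigma> ls \<in> lsets k n"
  using assms by (auto simp: lsets_def sum_list_permute set_permute_list)

context L1
begin

lemma A0_rep: "A0 br (replicate m x) y = (1 / fact m) *\<^sub>R (br x ^^ m) y"
proof -
  have "A0 br (replicate m x) y = (1 / (fact m)^2) *\<^sub>R (fact m *\<^sub>R (br x ^^ m) y)"
    unfolding A0_def by (simp add: permute_list_replicate card_perms sum_constant_scaleR)
  also have "\<dots> = (1 / fact m) *\<^sub>R (br x ^^ m) y"
    by (simp add: power2_eq_square)
  finally show ?thesis .
qed

lemma A0_sum:
  "(\<Sum>ls\<in>lsets k n. A0 br (map e ls) (w (sum_list ls)))
     = (1 / fact k) *\<^sub>R (\<Sum>ls\<in>lsets k n. foldr br (map e ls) (w (sum_list ls)))"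
proof -
  define g where "g ls = foldr br (map e ls) (w (sum_list ls))" for ls
  have len: "ls \<in> lsets k n \<Longrightarrow> length ls = k" for ls by (simp add: lsets_def)
  have "(\<Sum>ls\<in>lsets k n. A0 br (map e ls) (w (sum_list ls)))
      = (\<Sum>ls\<in>lsets k n. (1 / (fact k)^2) *\<^sub>R (\<Sum>\<sigma>\<in>{\<sigma>. \<sigma> permutes {..<k}}. g (permute_list \<sigma> ls)))"
  proof (rule sum.cong[OF refl])
    fix ls assume ls: "ls \<in> lsets k n"
    have "foldr br (permute_list \<sigma> (map e ls)) (w (sum_list ls)) = g (permute_list \<sigma> ls)"
      if "\<sigma> permutes {..<k}" for \<sigma>
      using that len[OF ls] by (simp add: g_def permute_list_map sum_list_permute)
    then show "A0 br (map e ls) (w (sum_list ls)) = (1 / (fact k)^2) *\<^sub>R (\<Sum>\<sigma>\<in>{\<sigma>. \<sigma> permutes {..<k}}. g (permute_list \<sigma> ls))"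
      unfolding A0_def using len[OF ls] by simp
  qed
  also have "\<dots> = (1 / (fact k)^2) *\<^sub>R (\<Sum>\<sigma>\<in>{\<sigma>. \<sigma> permutes {..<k}}. \<Sum>ls\<in>lsets k n. g (permute_list \<sigma> ls))"
    by (simp add: scaleR_sum_right sum.swap[of _ "lsets k n"])
  also have "\<dots> = (1 / (fact k)^2) *\<^sub>R (\<Sum>\<sigma>\<in>{\<sigma>. \<sigma> permutes {..<k}}. \<Sum>ls\<in>lsets k n. g ls)"
  proof -
    have "(\<Sum>ls\<in>lsets k n. g (permute_list \<sigma> ls)) = (\<Sum>ls\<in>lsets k n. g ls)" if s: "\<sigma> permutes {..<k}" for \<sigma>
    proof (rule sum.reindex_bij_witness[where i="permute_list (inv \<sigma>)" and j="permute_list \<sigma>"])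
      fix a assume a: "a \<in> lsets k n"
      have sa: "\<sigma> permutes {..<length a}" using s len[OF a] by simp
      show "permute_list (inv \<sigma>) (permute_list \<sigma> a) = a" using permute_list_inv_cancel(1)[OF sa] .
      show "permute_list \<sigma> a \<in> lsets k n" by (rule lsets_permute[OF s a])
    next
      fix b assume b: "b \<in> lsets k n"
      have sb: "\<sigma> permutes {..<length b}" using s len[OF b] by simp
      show "permute_list \<sigma> (permute_list (inv \<sigma>) b) = b" using permute_list_inv_cancel(2)[OF sb] .
      show "permute_list (inv \<sigma>) b \<in> lsets k n" by (rule lsets_permute[OF permutes_inv[OF s] b])
    qed simp
    then show ?thesis by simp
  qed
  also have "\<dots> = (1 / fact k) *\<^sub>R (\<Sum>ls\<in>lsets k n. g ls)"
    by (simp add: card_perms sum_constant_scaleR power2_eq_square)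
  finally show ?thesis by (simp add: g_def)
qed

lemma RHS_LF:
  "A0 br (replicate n x) y
     + (\<Sum>k=1..n div 2. \<Sum>ls\<in>{ls. length ls = k \<and> (\<forall>l\<in>set ls. 2 \<le> l) \<and> sum_list ls \<le> n}.
          A0 br (map e ls) (A0 br (replicate (n - sum_list ls) x) y))
   = LF e (\<lambda>m. (1 / fact m) *\<^sub>R (br x ^^ m) y) n"
proof -
  define u where "u m = (1 / fact m) *\<^sub>R (br x ^^ m) y" for m
  define T where "T k = (1 / fact k) *\<^sub>R (\<Sum>ls\<in>lsets k n. foldr br (map e ls) (u (n - sum_list ls)))" for k
  have "LF e u n = (\<Sum>k\<le>n. T k)" unfolding LF_def T_def ..
  also have "\<dots> = (\<Sum>k\<le>n div 2. T k)"
    by (rule sum.mono_neutral_right) (auto simp: T_def lsets_empty)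
  also have "\<dots> = T 0 + (\<Sum>k=1..n div 2. T k)"
    by (simp add: atMost_atLeast0 sum.atLeast_Suc_atMost)
  also have "T 0 = A0 br (replicate n x) y" by (simp add: T_def lsets_0 u_def A0_rep)
  also have "(\<Sum>k=1..n div 2. T k) = (\<Sum>k=1..n div 2. \<Sum>ls\<in>lsets k n. A0 br (map e ls) (A0 br (replicate (n - sum_list ls) x) y))"
  proof (rule sum.cong[OF refl])
    fix k
    show "T k = (\<Sum>ls\<in>lsets k n. A0 br (map e ls) (A0 br (replicate (n - sum_list ls) x) y))"
      using A0_sum[where k=k and n=n and e=e and w="\<lambda>s. u (n - s)"] by (simp add: T_def u_def A0_rep)
  qed
  finally show ?thesis by (simp add: u_def lsets_def)
qed

end



lemma invariant_cong:
  assumes "\<And>zs. length zs = N \<Longrightarrow> F zs = G zs" "invariant br N G"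
  shows "invariant br N F"
  using assms unfolding invariant_def by simp

context L1
begin

fun fterm :: "(nat \<Rightarrow> 'a list \<Rightarrow> 'a) \<Rightarrow> nat list \<Rightarrow> nat \<Rightarrow> 'a list \<Rightarrow> 'a" where
  "fterm d [] 0 = (\<lambda>zs. hd zs)"
| "fterm d [] (Suc m) = comb 1 (\<lambda>zs. hd zs) (fterm d [] m)"
| "fterm d (l # ls) m = comb l (d l) (fterm d ls m)"

lemma fterm_nil_good:
  "multilinear (m + 1) (fterm d [] m) \<and> invariant br (m + 1) (fterm d [] m)"
proof (induction m)
  case 0
  then show ?case using multilinear_hd invariant_hd by simp
next
  case (Suc m)
  then show ?case using multilinear_comb[OF multilinear_hd, of "m + 1"] invariant_comb[OF invariant_hd, of "m+1"]
    by simp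
qed

lemma fterm_good:
  assumes "\<And>l. multilinear l (d l) \<and> invariant br l (d l)"
  shows "multilinear (sum_list ls + m + 1) (fterm d ls m) \<and> invariant br (sum_list ls + m + 1) (fterm d ls m)"
proof (induction ls)
  case Nil
  then show ?case using fterm_nil_good by simp
next
  case (Cons l ls)
  have ml: "multilinear l (d l)" "invariant br l (d l)" using assms by auto
  have a: "multilinear (l + (sum_list ls + m + 1)) (comb l (d l) (fterm d ls m))"
    by (rule multilinear_comb[OF ml(1)]) (use Cons in auto)
  have b: "invariant br (l + (sum_list ls + m + 1)) (comb l (d l) (fterm d ls m))"
    by (rule invariant_comb[OF ml(2)]) (use Cons in auto)
  show ?case using a b by (simp add: add.assoc)
qed

lemma fterm_diag:
  "fterm d ls m (replicate (sum_list ls + m) x @ [y]) = foldr br (map (\<lambda>l. d l (replicate l x)) ls) ((br x ^^ m) y)"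
proof (induction d ls m rule: fterm.induct)
  case (1 d) then show ?case by simp
next
  case (2 d m) then show ?case by (simp add: comb_def)
next
  case (3 d l ls m)
  have "take l (replicate (l + sum_list ls + m) x @ [y]) = replicate l x"
    by (simp add: add.assoc)
  moreover have "drop l (replicate (l + sum_list ls + m) x @ [y]) = replicate (sum_list ls + m) x @ [y]"
    by (simp add: add.assoc)
  ultimately show ?case using 3 by (simp add: comb_def add.assoc)
qed

lemma foldr_br_scale: "foldr br L (c *\<^sub>R w) = c *\<^sub>R foldr br L w"
  by (induction L) auto

definition Q :: "(nat \<Rightarrow> 'a list \<Rightarrow> 'a) \<Rightarrow> nat \<Rightarrow> 'a list \<Rightarrow> 'a" where
  "Q d n zs = (\<Sum>k\<le>n. (1 / fact k) *\<^sub>R (\<Sum>ls\<in>lsets k n.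
       (1 / fact (n - sum_list ls)) *\<^sub>R fterm d ls (n - sum_list ls) zs))"

lemma Q_good:
  assumes "\<And>l. multilinear l (d l) \<and> invariant br l (d l)"
  shows "multilinear (n + 1) (Q d n) \<and> invariant br (n + 1) (Q d n)"
proof -
  have g: "multilinear (n + 1) (fterm d ls (n - sum_list ls)) \<and> invariant br (n + 1) (fterm d ls (n - sum_list ls))"
    if "ls \<in> lsets k n" for k ls
  proof -
    have "sum_list ls + (n - sum_list ls) + 1 = n + 1" using that by (simp add: lsets_def)
    then show ?thesis using fterm_good[OF assms, of ls "n - sum_list ls"] by simp
  qed
  show ?thesis unfolding Q_def
    by (intro conjI multilinear_sum invariant_sum finite_lsets finite_atMost multilinear_scale invariant_scale)
       (use g in auto)
qed

lemma Q_diag: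
  "Q d n (replicate n x @ [y]) = LF (\<lambda>l. d l (replicate l x)) (\<lambda>m. (1 / fact m) *\<^sub>R (br x ^^ m) y) n"
  unfolding Q_def LF_def
proof (intro sum.cong refl arg_cong[where f="\<lambda>v. _ *\<^sub>R v"])
  fix k ls assume ls: "ls \<in> lsets k n"
  then have "replicate n x = replicate (sum_list ls + (n - sum_list ls)) x" by (simp add: lsets_def)
  then show "(1 / fact (n - sum_list ls)) *\<^sub>R fterm d ls (n - sum_list ls) (replicate n x @ [y]) =
         foldr br (map (\<lambda>l. d l (replicate l x)) ls) ((1 / fact (n - sum_list ls)) *\<^sub>R (br x ^^ (n - sum_list ls)) y)"
    by (simp only: fterm_diag foldr_br_scale)
qed

end



locale L2 = L1 +
  fixes A :: "nat \<Rightarrow> 'a list \<Rightarrow> 'a"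
  assumes H0: "H0_zero br" and H1: "H1_zero br"
    and A1: "\<And>x y. A 1 [x, y] = br x y"
    and A_multi: "\<And>n. n \<ge> 2 \<Longrightarrow> multilinear (n + 1) (A n)"
    and A_inv: "\<And>n. n \<ge> 2 \<Longrightarrow> invariant br (n + 1) (A n)"
    and A_rec: "\<And>p x y z. p \<ge> 1 \<Longrightarrow>
        diag p (A p) x (br y z) =
          br y (diag p (A p) x z) + br (diag p (A p) x y) z
          + (\<Sum>r=1..p-1. br (diag r (A r) x y) (diag (p - r) (A (p - r)) x z))"
begin

lemma br_zero_imp: "(\<And>m. br c m = 0) \<Longrightarrow> c = 0"
  using H0 unfolding H0_zero_def by blast

lemma br_eq_imp: "(\<And>m. br c m = br c' m) \<Longrightarrow> c = c'"
  using br_zero_imp[of "c - c'"] by simp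

lemma Ucoef_ex: "\<exists>U. \<forall>i\<in>Basis. \<forall>c. c \<bullet> i = (\<Sum>p\<in>Basis \<times> Basis. U i p * (br c (fst p) \<bullet> snd p))"
proof -
  define w where "w p = (\<Sum>i\<in>Basis. (br i (fst p) \<bullet> snd p) *\<^sub>R i)" for p :: "'a \<times> 'a"
  have cw: "c \<bullet> w p = br c (fst p) \<bullet> snd p" for c p
  proof -
    have "br c (fst p) = br (\<Sum>i\<in>Basis. (c \<bullet> i) *\<^sub>R i) (fst p)" by (simp add: euclidean_representation)
    also have "\<dots> = (\<Sum>i\<in>Basis. (c \<bullet> i) *\<^sub>R br i (fst p))" by (simp add: br_sum_left)
    finally have "br c (fst p) \<bullet> snd p = (\<Sum>i\<in>Basis. (c \<bullet> i) * (br i (fst p) \<bullet> snd p))"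
      by (simp add: inner_sum_left)
    moreover have "c \<bullet> w p = (\<Sum>i\<in>Basis. (br i (fst p) \<bullet> snd p) * (c \<bullet> i))"
      by (simp add: w_def inner_sum_right)
    ultimately show ?thesis by (simp add: mult.commute)
  qed
  have sp: "span (w ` (Basis \<times> Basis)) = UNIV"
  proof (rule ccontr)
    assume ne: "span (w ` (Basis \<times> Basis)) \<noteq> UNIV"
    have "dim (w ` (Basis \<times> Basis)) \<noteq> DIM('a)" using ne dim_eq_full by blast
    then have dl: "dim (w ` (Basis \<times> Basis)) < DIM('a)" using dim_subset_UNIV[of "w ` (Basis \<times> Basis)"] by linarith
    obtain c :: 'a where c: "c \<noteq> 0" "\<And>y. y \<in> span (w ` (Basis \<times> Basis)) \<Longrightarrow> orthogonal c y"
      using orthogonal_to_subspace_exists[OF dl] by blast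
    have cab: "br c a \<bullet> b = 0" if "a \<in> Basis" "b \<in> Basis" for a b
    proof -
      have "w (a, b) \<in> span (w ` (Basis \<times> Basis))" using that by (intro span_base) auto
      then have "c \<bullet> w (a, b) = 0" using c(2) by (simp add: orthogonal_def)
      then show ?thesis by (simp add: cw)
    qed
    have ba: "br c a = 0" if a: "a \<in> Basis" for a
    proof (rule euclidean_eqI)
      fix b :: 'a assume b: "b \<in> Basis"
      show "br c a \<bullet> b = 0 \<bullet> b" using cab[OF a b] by simp
    qed
    have "br c m = 0" for m
    proof -
      have "br c m = br c (\<Sum>a\<in>Basis. (m \<bullet> a) *\<^sub>R a)" by (simp add: euclidean_representation)
      also have "\<dots> = 0" by (simp add: br_sum_right ba)
      finally show ?thesis .
    qed
    then have "c = 0" by (rule br_zero_imp)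
    then show False using c(1) by simp
  qed
  have "\<forall>i\<in>Basis. \<exists>u. \<forall>c. c \<bullet> i = (\<Sum>p\<in>Basis \<times> Basis. u p * (br c (fst p) \<bullet> snd p))"
  proof
    fix i :: 'a assume "i \<in> Basis"
    have "i \<in> span (w ` (Basis \<times> Basis))" using sp by simp
    then obtain u where u: "i = (\<Sum>p\<in>Basis \<times> Basis. u p *\<^sub>R w p)"
      using span_image_rep[of "Basis \<times> Basis" i w] by auto
    have "c \<bullet> i = (\<Sum>p\<in>Basis \<times> Basis. u p * (br c (fst p) \<bullet> snd p))" for c
      by (subst u) (simp add: inner_sum_right cw)
    then show "\<exists>u. \<forall>c. c \<bullet> i = (\<Sum>p\<in>Basis \<times> Basis. u p * (br c (fst p) \<bullet> snd p))" by blast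
  qed
  then show ?thesis by (rule bchoice)
qed

definition Ucoef :: "'a \<Rightarrow> 'a \<times> 'a \<Rightarrow> real" where
  "Ucoef = (SOME U. \<forall>i\<in>Basis. \<forall>c. c \<bullet> i = (\<Sum>p\<in>Basis \<times> Basis. U i p * (br c (fst p) \<bullet> snd p)))"

lemma Ucoef: "i \<in> Basis \<Longrightarrow> c \<bullet> i = (\<Sum>p\<in>Basis \<times> Basis. Ucoef i p * (br c (fst p) \<bullet> snd p))"
  using someI_ex[OF Ucoef_ex] unfolding Ucoef_def by blast

definition Lft :: "('a \<Rightarrow> 'a) \<Rightarrow> 'a" where
  "Lft F = (\<Sum>i\<in>Basis. (\<Sum>p\<in>Basis \<times> Basis. Ucoef i p * (F (fst p) \<bullet> snd p)) *\<^sub>R i)"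

lemma Lft_br: "Lft (br c) = c"
  unfolding Lft_def by (simp add: Ucoef[symmetric] euclidean_representation)

lemma multilinear_Lft:
  assumes "\<And>y. multilinear n (\<lambda>xs. V xs y)"
  shows "multilinear n (\<lambda>xs. Lft (V xs))"
  unfolding Lft_def
proof (intro multilinear_sum finite_Basis)
  fix i :: 'a
  have lin1: "linear (\<lambda>r::real. r *\<^sub>R i)" by (auto intro!: linearI simp: scaleR_add_left)
  have lin2: "linear (\<lambda>v. Ucoef i p * (v \<bullet> snd p))" for p
    by (auto intro!: linearI simp: inner_add_left algebra_simps)
  have "multilinear n (\<lambda>xs. \<Sum>p\<in>Basis \<times> Basis. Ucoef i p * (V xs (fst p) \<bullet> snd p))"
    by (intro multilinear_sum finite_cartesian_product finite_Basis multilinear_linear_comp[OF assms lin2])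
  from multilinear_linear_comp[OF this lin1]
  show "multilinear n (\<lambda>xs. (\<Sum>p\<in>Basis \<times> Basis. Ucoef i p * (V xs (fst p) \<bullet> snd p)) *\<^sub>R i)" .
qed

definition Phi :: "nat \<Rightarrow> 'a \<Rightarrow> 'a \<Rightarrow> 'a" where
  "Phi n x y = (if n = 0 then y else diag n (A n) x y)"

lemma Phi_mult: "Phi n x (br y z) = brs (\<lambda>m. Phi m x y) (\<lambda>m. Phi m x z) n"
proof (cases n)
  case 0 then show ?thesis by (simp add: Phi_def brs_def)
next
  case (Suc m)
  have "brs (\<lambda>m. Phi m x y) (\<lambda>m. Phi m x z) n
      = br y (Phi (Suc m) x z) + (\<Sum>i<m. br (Phi (Suc i) x y) (Phi (Suc m - Suc i) x z)) + br (Phi (Suc m) x y) z"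
    unfolding brs_def Suc sum.atMost_Suc_shift by (simp add: Phi_def lessThan_Suc_atMost[symmetric])
  also have "(\<Sum>i<m. br (Phi (Suc i) x y) (Phi (Suc m - Suc i) x z))
     = (\<Sum>r=1..Suc m - 1. br (diag r (A r) x y) (diag (Suc m - r) (A (Suc m - r)) x z))"
    by (simp add: sum.atLeast1_atMost_eq Phi_def)
  finally show ?thesis using A_rec[of "Suc m" x y z] Suc by (simp add: Phi_def algebra_simps)
qed

end



context L2
begin

definition Vm :: "(nat \<Rightarrow> 'a list \<Rightarrow> 'a) \<Rightarrow> nat \<Rightarrow> 'a list \<Rightarrow> 'a" where
  "Vm d n = symz n (\<lambda>ws. A n ws - Q d n ws)"

function Bf :: "nat \<times> 'a list \<Rightarrow> 'a" where
  "Bf (n, xs) = (if n < 2 then 0 else Lft (\<lambda>y. Vm (\<lambda>l zs. if l < n then Bf (l, zs) else 0) n (xs @ [y])))"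
  by pat_completeness auto
termination by (relation "Wellfounded.measure fst") auto

declare Bf.simps[simp del]

lemma Bf_small: "n < 2 \<Longrightarrow> Bf (n, xs) = 0"
  by (simp add: Bf.simps)

lemma Bf_big: "2 \<le> n \<Longrightarrow> Bf (n, xs) = Lft (\<lambda>y. Vm (\<lambda>l zs. if l < n then Bf (l, zs) else 0) n (xs @ [y]))"
  by (subst Bf.simps) simp

definition ux :: "'a \<Rightarrow> 'a \<Rightarrow> nat \<Rightarrow> 'a" where
  "ux x y m = (1 / fact m) *\<^sub>R (br x ^^ m) y"

lemma ux_0[simp]: "ux x y 0 = y" by (simp add: ux_def)

lemma ux_Ex: "ux x y = Ex (Xs x) (D0 y)"
  by (rule ext) (simp add: ux_def Ex_Xs)

lemma LF_0: "LF d u 0 = u 0"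
  by (simp add: LF_def lsets_0)

lemma Xs_0: "Xs x 0 = 0" by (simp add: Xs_def)

lemma step:
  assumes n2: "2 \<le> n"
    and IH1: "\<And>m x y. 1 \<le> m \<Longrightarrow> m < n \<Longrightarrow> Phi m x y = LF (\<lambda>l. Bf (l, replicate l x)) (ux x y) m"
    and IH2: "\<And>m. 2 \<le> m \<Longrightarrow> m < n \<Longrightarrow> multilinear m (\<lambda>zs. Bf (m, zs)) \<and> invariant br m (\<lambda>zs. Bf (m, zs))"
  shows "(\<forall>x y. Phi n x y = LF (\<lambda>l. Bf (l, replicate l x)) (ux x y) n)
     \<and> multilinear n (\<lambda>zs. Bf (n, zs)) \<and> invariant br n (\<lambda>zs. Bf (n, zs)) \<and> symmetric_map n (\<lambda>zs. Bf (n, zs))"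
proof -
  define d where "d = (\<lambda>l zs. if l < n then Bf (l, zs) else (0::'a))"
  have dgood: "multilinear l (d l) \<and> invariant br l (d l)" for l
  proof (cases "2 \<le> l \<and> l < n")
    case True then show ?thesis using IH2[of l] by (simp add: d_def)
  next
    case False
    then have "d l = (\<lambda>zs. 0)" by (auto simp: d_def Bf_small)
    then show ?thesis by (simp add: multilinear_zero invariant_zero)
  qed
  define V where "V = Vm d n"
  have Bn: "Bf (n, xs) = Lft (\<lambda>y. V (xs @ [y]))" for xs
    using Bf_big[OF n2] by (simp add: V_def d_def)
  have gA: "multilinear (n + 1) (\<lambda>ws. A n ws - Q d n ws) \<and> invariant br (n + 1) (\<lambda>ws. A n ws - Q d n ws)"
    using Q_good[OF dgood, of n] A_multi[OF n2] A_inv[OF n2]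
    by (auto intro: multilinear_diff invariant_diff)
  have mV: "multilinear (n + 1) V" unfolding V_def Vm_def
    by (rule multilinear_symz) (use gA in auto)
  have iV: "invariant br (n + 1) V" unfolding V_def Vm_def
    by (rule invariant_symz) (use gA in auto)
  have sV: "V (permute_list \<sigma> xs @ [y]) = V (xs @ [y])" if "length xs = n" "\<sigma> permutes {..<n}" for xs y \<sigma>
  proof -
    have "permute_list \<sigma> xs @ [y] = permute_list \<sigma> (xs @ [y])"
      using that by (intro permute_list_append_fix) simp
    then show ?thesis unfolding V_def Vm_def using symz_sym[OF that(2), of "xs @ [y]"] that by simp
  qed
  define Dl where "Dl x l = d l (replicate l x)" for x l
  have dV: "V (replicate n x @ [y]) = Phi n x y - LF (Dl x) (ux x y) n" for x y
    unfolding V_def Vm_def symz_diag Q_diag Dl_def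
    using n2 by (simp add: Phi_def diag_def ux_def[abs_def])
  have mVy: "multilinear n (\<lambda>xs. V (xs @ [y]))" for y
    by (rule multilinear_comp_list[where \<pi>=id, OF mV]) (auto simp: list_update_append1)
  have linV: "linear (\<lambda>y. V (replicate n x @ [y]))" for x
  proof -
    have "linear (\<lambda>v. V ((replicate n x @ [0])[n := v]))"
      using mV unfolding multilinear_def by simp
    moreover have "(replicate n x @ [0])[n := v] = replicate n x @ [v]" for v
      by (simp add: list_update_append)
    ultimately show ?thesis by simp
  qed
  define G where "G x y m = LF (Dl x) (ux x y) m" for x y m
  have Dl01: "Dl x 0 = 0" "Dl x 1 = 0" for x using n2 by (auto simp: Dl_def d_def Bf_small)
  have GEx: "G x y = Ex (Dl x) (Ex (Xs x) (D0 y))" for x y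
    by (rule ext) (simp add: G_def Ex_LF[OF Dl01] ux_Ex)
  have Gmult: "G x (br y z) m = brs (G x y) (G x z) m" for x y z m
  proof -
    have "D0 (br y z) = brs (D0 y) (D0 z)" by (rule ext) (simp add: brs_D0)
    then have "Ex (Xs x) (D0 (br y z)) = Ex (Xs x) (brs (D0 y) (D0 z))" by (simp only:)
    also have "\<dots> = brs (Ex (Xs x) (D0 y)) (Ex (Xs x) (D0 z))"
      by (rule ext, rule Ex_mult[of "Xs x", OF Xs_0])
    finally have e: "Ex (Xs x) (D0 (br y z)) = brs (Ex (Xs x) (D0 y)) (Ex (Xs x) (D0 z))" .
    show ?thesis unfolding GEx e by (rule Ex_mult[of "Dl x", OF Dl01(1)])
  qed
  have Glow: "Phi m x y = G x y m" if "m < n" for m x y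
  proof (cases "m = 0")
    case True then show ?thesis by (simp add: Phi_def G_def LF_0)
  next
    case False
    then have "Phi m x y = LF (\<lambda>l. Bf (l, replicate l x)) (ux x y) m" using IH1[of m] that by simp
    also have "\<dots> = G x y m" unfolding G_def
      by (rule LF_cong) (use that in \<open>auto simp: Dl_def d_def\<close>)
    finally show ?thesis .
  qed
  define F where "F x y = Phi n x y - G x y n" for x y
  have FV: "F x y = V (replicate n x @ [y])" for x y by (simp add: F_def dV G_def)
  have Fder: "F x (br y z) = br y (F x z) + br (F x y) z" for x y z
  proof -
    have "F x (br y z) = (\<Sum>i\<le>n. br (Phi i x y) (Phi (n - i) x z) - br (G x y i) (G x z (n - i)))"
      unfolding F_def Phi_mult Gmult brs_def by (simp add: sum_subtractf)
    also have "\<dots> = (\<Sum>i\<le>n. (if i = 0 then br y (F x z) else 0) + (if i = n then br (F x y) z else 0))"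
    proof (rule sum.cong[OF refl])
      fix i assume i: "i \<in> {..n}"
      show "br (Phi i x y) (Phi (n - i) x z) - br (G x y i) (G x z (n - i))
          = (if i = 0 then br y (F x z) else 0) + (if i = n then br (F x y) z else 0)"
      proof (cases "i = 0")
        case True
        then show ?thesis using n2 Glow[of 0 x y] by (simp add: F_def Phi_def)
      next
        case False
        show ?thesis
        proof (cases "i = n")
          case True
          then show ?thesis using n2 Glow[of 0 x z] by (simp add: F_def Phi_def)
        next
          case False
          then have "i < n" "n - i < n" using i \<open>i \<noteq> 0\<close> by auto
          then show ?thesis using False \<open>i \<noteq> 0\<close> Glow by simp
        qed
      qed
    qed
    also have "\<dots> = br y (F x z) + br (F x y) z" using n2 by (simp add: sum.distrib)
    finally show ?thesis .
  qed
  have Fin: "\<exists>c. F x = br c" for x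
  proof -
    have "linear (F x)" using linV[of x] by (simp add: FV[abs_def])
    then have "F x \<in> derivations br" unfolding derivations_def using Fder by (auto simp: add.commute)
    then have "F x \<in> inner_derivations br" using H1 unfolding H1_zero_def by blast
    then show ?thesis unfolding inner_derivations_def by blast
  qed
  have BF: "br (Bf (n, replicate n x)) y = F x y" for x y
  proof -
    obtain c where c: "F x = br c" using Fin by blast
    have "Bf (n, replicate n x) = Lft (F x)" by (simp add: Bn FV[abs_def])
    then show ?thesis using c Lft_br by simp
  qed
  have part1: "Phi n x y = LF (\<lambda>l. Bf (l, replicate l x)) (ux x y) n" for x y
  proof -
    have "LF (\<lambda>l. Bf (l, replicate l x)) (ux x y) n = LF (Dl x) (ux x y) n + br (Bf (n, replicate n x) - Dl x n) (ux x y 0)"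
      by (rule LF_diff) (use n2 in \<open>auto simp: Dl_def d_def\<close>)
    also have "Dl x n = 0" by (simp add: Dl_def d_def)
    finally show ?thesis using BF[of x y] by (simp add: F_def G_def)
  qed
  have mB: "multilinear n (\<lambda>zs. Bf (n, zs))"
    unfolding Bn by (rule multilinear_Lft) (rule mVy)
  have sB: "symmetric_map n (\<lambda>zs. Bf (n, zs))"
    unfolding symmetric_map_def Bn using sV by simp
  have WV: "br (Bf (n, xs)) y = V (xs @ [y])" if "length xs = n" for xs y
  proof -
    define H where "H xs' = br (Bf (n, xs')) y - V (xs' @ [y])" for xs'
    have "multilinear n H" unfolding H_def
      by (intro multilinear_diff mVy multilinear_linear_comp[OF mB linear_br_left])
    moreover have "symmetric_map n H"
      using sB sV unfolding symmetric_map_def H_def by simp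
    moreover have "H (replicate n x) = 0" for x unfolding H_def by (simp add: BF FV)
    ultimately have "H xs = 0" using polarization that by blast
    then show ?thesis by (simp add: H_def)
  qed
  define W where "W zs = br (Bf (n, take n zs)) (zs ! n)" for zs
  have WV': "W zs = V zs" if "length zs = n + 1" for zs
  proof -
    have "length zs = Suc n" using that by simp
    then obtain xs y where "zs = xs @ [y]" "length xs = n" using length_Suc_conv_rev[of zs n] by blast
    then show ?thesis using WV by (simp add: W_def nth_append)
  qed
  have iW: "invariant br (n + 1) W" by (rule invariant_cong[OF WV' iV])
  have Wapp: "W (xs @ [m]) = br (Bf (n, xs)) m" if "length xs = n" for xs m
    using that by (simp add: W_def nth_append)
  have iB: "invariant br n (\<lambda>zs. Bf (n, zs))"
    unfolding invariant_def
  proof (intro allI impI)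
    fix x ys assume ly: "length (ys :: 'a list) = n"
    define g where "g = br x (Bf (n, ys)) - (\<Sum>i<n. Bf (n, ys[i := br x (ys ! i)]))"
    have "br g m = 0" for m
    proof -
      have inv: "br x (W (ys @ [m])) = (\<Sum>i<n + 1. W ((ys @ [m])[i := br x ((ys @ [m]) ! i)]))"
        using iW ly unfolding invariant_def by simp
      also have "\<dots> = (\<Sum>i<n. W (ys[i := br x (ys ! i)] @ [m])) + W (ys @ [br x m])"
        using ly by (simp add: list_update_append nth_append)
      finally have inv': "br x (br (Bf (n, ys)) m) = (\<Sum>i<n. br (Bf (n, ys[i := br x (ys ! i)])) m) + br (Bf (n, ys)) (br x m)"
        using ly by (simp add: Wapp)
      have "br g m = br (br x (Bf (n, ys))) m - (\<Sum>i<n. br (Bf (n, ys[i := br x (ys ! i)])) m)"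
        by (simp add: g_def br_sum_left)
      also have "br (br x (Bf (n, ys))) m = br x (br (Bf (n, ys)) m) - br (Bf (n, ys)) (br x m)"
        using leib[of x "Bf (n, ys)" m] by (simp add: algebra_simps)
      finally show ?thesis using inv' by simp
    qed
    then have "g = 0" by (rule br_zero_imp)
    then show "br x (Bf (n, ys)) = (\<Sum>i<n. Bf (n, ys[i := br x (ys ! i)]))" by (simp add: g_def)
  qed
  show ?thesis using part1 mB iB sB by blast
qed

end



context L2
begin

lemma main:
  "(1 \<le> n \<longrightarrow> (\<forall>x y. Phi n x y = LF (\<lambda>l. Bf (l, replicate l x)) (ux x y) n))
   \<and> (2 \<le> n \<longrightarrow> multilinear n (\<lambda>zs. Bf (n, zs)) \<and> invariant br n (\<lambda>zs. Bf (n, zs))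
        \<and> symmetric_map n (\<lambda>zs. Bf (n, zs)))"
proof (induction n rule: less_induct)
  case (less n)
  show ?case
  proof (cases "n < 2")
    case True
    have "Phi 1 x y = LF (\<lambda>l. Bf (l, replicate l x)) (ux x y) 1" for x y
    proof -
      have "lsets 1 1 = {}" by (rule lsets_empty) simp
      then have "LF (\<lambda>l. Bf (l, replicate l x)) (ux x y) 1 = ux x y 1"
        by (simp add: LF_def lsets_0)
      also have "\<dots> = br x y" by (simp add: ux_def)
      finally show ?thesis using A1[of x y] by (simp add: Phi_def diag_def)
    qed
    then show ?thesis using True by (auto simp: less_2_cases_iff)
  next
    case False
    then have n2: "2 \<le> n" by simp
    show ?thesis using step[OF n2] less.IH by auto
  qed
qed

lemma existence:
  "\<exists>B :: nat \<Rightarrow> 'a list \<Rightarrow> 'a.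
            (\<forall>n\<ge>2. multilinear n (B n) \<and> invariant br n (B n) \<and> symmetric_map n (B n)) \<and>
            (\<forall>n\<ge>2. \<forall>x y. diag n (A n) x y =
               A0 br (replicate n x) y
               + (\<Sum>k=1..n div 2. \<Sum>ls\<in>{ls. length ls = k \<and> (\<forall>l\<in>set ls. 2 \<le> l) \<and> sum_list ls \<le> n}.
                    A0 br (map (\<lambda>l. B l (replicate l x)) ls)
                       (A0 br (replicate (n - sum_list ls) x) y)))"
proof (rule exI[of _ "\<lambda>n zs. Bf (n, zs)"], rule conjI)
  show "\<forall>n\<ge>2. multilinear n (\<lambda>zs. Bf (n, zs)) \<and> invariant br n (\<lambda>zs. Bf (n, zs)) \<and> symmetric_map n (\<lambda>zs. Bf (n, zs))"
    using main by blast
next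
  show "\<forall>n\<ge>2. \<forall>x y. diag n (A n) x y =
               A0 br (replicate n x) y
               + (\<Sum>k=1..n div 2. \<Sum>ls\<in>{ls. length ls = k \<and> (\<forall>l\<in>set ls. 2 \<le> l) \<and> sum_list ls \<le> n}.
                    A0 br (map (\<lambda>l. Bf (l, replicate l x)) ls)
                       (A0 br (replicate (n - sum_list ls) x) y))"
  proof (intro allI impI)
  fix n :: nat and x y assume n2: "2 \<le> n"
  have "diag n (A n) x y = Phi n x y" using n2 by (simp add: Phi_def)
  also have "\<dots> = LF (\<lambda>l. Bf (l, replicate l x)) (ux x y) n" using main[of n] n2 by simp
  also have "ux x y = (\<lambda>m. (1 / fact m) *\<^sub>R (br x ^^ m) y)" by (rule ext) (simp add: ux_def)
  finally show "diag n (A n) x y =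
               A0 br (replicate n x) y
               + (\<Sum>k=1..n div 2. \<Sum>ls\<in>{ls. length ls = k \<and> (\<forall>l\<in>set ls. 2 \<le> l) \<and> sum_list ls \<le> n}.
                    A0 br (map (\<lambda>l. Bf (l, replicate l x)) ls)
                       (A0 br (replicate (n - sum_list ls) x) y))"
    by (simp only: RHS_LF)
  qed
qed

lemma uniqueness:
  fixes B B' :: "nat \<Rightarrow> 'a list \<Rightarrow> 'a"
  assumes gB: "\<forall>n\<ge>2. multilinear n (B n) \<and> invariant br n (B n) \<and> symmetric_map n (B n)"
    and fB: "\<forall>n\<ge>2. \<forall>x y. diag n (A n) x y =
               A0 br (replicate n x) y
               + (\<Sum>k=1..n div 2. \<Sum>ls\<in>{ls. length ls = k \<and> (\<forall>l\<in>set ls. 2 \<le> l) \<and> sum_list ls \<le> n}.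
                    A0 br (map (\<lambda>l. B l (replicate l x)) ls)
                       (A0 br (replicate (n - sum_list ls) x) y))"
    and gB': "\<forall>n\<ge>2. multilinear n (B' n) \<and> invariant br n (B' n) \<and> symmetric_map n (B' n)"
    and fB': "\<forall>n\<ge>2. \<forall>x y. diag n (A n) x y =
               A0 br (replicate n x) y
               + (\<Sum>k=1..n div 2. \<Sum>ls\<in>{ls. length ls = k \<and> (\<forall>l\<in>set ls. 2 \<le> l) \<and> sum_list ls \<le> n}.
                    A0 br (map (\<lambda>l. B' l (replicate l x)) ls)
                       (A0 br (replicate (n - sum_list ls) x) y))"
  shows "\<forall>n\<ge>2. \<forall>xs. length xs = n \<longrightarrow> B n xs = B' n xs"
proof -
  have "\<forall>xs. length xs = n \<longrightarrow> B n xs = B' n xs" if "2 \<le> n" for n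
    using that
  proof (induction n rule: less_induct)
    case (less n)
    define u where "u x y = (\<lambda>m. (1 / fact m) *\<^sub>R (br x ^^ m) y)" for x y :: 'a
    have LFeq: "LF (\<lambda>l. B l (replicate l x)) (u x y) n = LF (\<lambda>l. B' l (replicate l x)) (u x y) n" for x y
      using fB[rule_format, OF less.prems, of x y] fB'[rule_format, OF less.prems, of x y]
      by (simp only: RHS_LF u_def)
    have dg: "B n (replicate n x) = B' n (replicate n x)" for x
    proof (rule br_eq_imp)
      fix y
      have "LF (\<lambda>l. B l (replicate l x)) (u x y) n = LF (\<lambda>l. B' l (replicate l x)) (u x y) n
          + br (B n (replicate n x) - B' n (replicate n x)) (u x y 0)"
        by (rule LF_diff) (use less.IH less.prems in auto)
      then have "br (B n (replicate n x) - B' n (replicate n x)) y = 0"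
        using LFeq[of x y] by (simp add: u_def)
      then show "br (B n (replicate n x)) y = br (B' n (replicate n x)) y" by simp
    qed
    define G where "G xs = B n xs - B' n xs" for xs
    have "multilinear n G" unfolding G_def
      using gB gB' less.prems by (intro multilinear_diff) auto
    moreover have "symmetric_map n G"
      using gB gB' less.prems unfolding G_def symmetric_map_def by simp
    moreover have "G (replicate n x) = 0" for x by (simp add: G_def dg)
    ultimately have "G xs = 0" if "length xs = n" for xs using polarization that by blast
    then show ?case by (simp add: G_def)
  qed
  then show ?thesis by blast
qed

end



theorem theorem2:
  fixes br :: "'a::euclidean_space \<Rightarrow> 'a \<Rightarrow> 'a"
    and A :: "nat \<Rightarrow> 'a list \<Rightarrow> 'a"
  assumes leib: "left_leibniz br"
    and H0: "H0_zero br"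
    and H1: "H1_zero br"
    and A0_eq: "\<And>x y. A 0 [x, y] = y"
    and A1_eq: "\<And>x y. A 1 [x, y] = br x y"
    and A_multi: "\<And>n. n \<ge> 2 \<Longrightarrow> multilinear (n + 1) (A n)"
    and A_inv: "\<And>n. n \<ge> 2 \<Longrightarrow> invariant br (n + 1) (A n)"
    and A_sym: "\<And>n. n \<ge> 2 \<Longrightarrow> symmetric_first n (A n)"
    and A_rec: "\<And>p x y z. p \<ge> 1 \<Longrightarrow>
        diag p (A p) x (br y z) =
          br y (diag p (A p) x z) + br (diag p (A p) x y) z
          + (\<Sum>r=1..p-1. br (diag r (A r) x y) (diag (p - r) (A (p - r)) x z))"
  shows "(\<exists>B :: nat \<Rightarrow> 'a list \<Rightarrow> 'a.
            (\<forall>n\<ge>2. multilinear n (B n) \<and> invariant br n (B n) \<and> symmetric_map n (B n)) \<and>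
            (\<forall>n\<ge>2. \<forall>x y. diag n (A n) x y =
               A0 br (replicate n x) y
               + (\<Sum>k=1..n div 2. \<Sum>ls\<in>{ls. length ls = k \<and> (\<forall>l\<in>set ls. 2 \<le> l) \<and> sum_list ls \<le> n}.
                    A0 br (map (\<lambda>l. B l (replicate l x)) ls)
                       (A0 br (replicate (n - sum_list ls) x) y))))
       \<and> (\<forall>B B' :: nat \<Rightarrow> 'a list \<Rightarrow> 'a.
            ((\<forall>n\<ge>2. multilinear n (B n) \<and> invariant br n (B n) \<and> symmetric_map n (B n)) \<and>
             (\<forall>n\<ge>2. \<forall>x y. diag n (A n) x y =
               A0 br (replicate n x) y
               + (\<Sum>k=1..n div 2. \<Sum>ls\<in>{ls. length ls = k \<and> (\<forall>l\<in>set ls. 2 \<le> l) \<and> sum_list ls \<le> n}.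
                    A0 br (map (\<lambda>l. B l (replicate l x)) ls)
                       (A0 br (replicate (n - sum_list ls) x) y)))) \<and>
            ((\<forall>n\<ge>2. multilinear n (B' n) \<and> invariant br n (B' n) \<and> symmetric_map n (B' n)) \<and>
             (\<forall>n\<ge>2. \<forall>x y. diag n (A n) x y =
               A0 br (replicate n x) y
               + (\<Sum>k=1..n div 2. \<Sum>ls\<in>{ls. length ls = k \<and> (\<forall>l\<in>set ls. 2 \<le> l) \<and> sum_list ls \<le> n}.
                    A0 br (map (\<lambda>l. B' l (replicate l x)) ls)
                       (A0 br (replicate (n - sum_list ls) x) y))))
            \<longrightarrow> (\<forall>n\<ge>2. \<forall>xs. length xs = n \<longrightarrow> B n xs = B' n xs))"
  proof -
  have ll: "bilinear br \<and> (\<forall>u v w. br u (br v w) = br (br u v) w + br v (br u w))"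
    using leib unfolding left_leibniz_def by blast
  have bil: "bilinear br" using ll by blast
  have lb: "\<And>u v w. br u (br v w) = br (br u v) w + br v (br u w)" using ll by blast
  have L2: "L2 br A"
    unfolding L2_def L1_def L0_def L2_axioms_def L1_axioms_def
    using bil lb H0 H1 A1_eq A_multi A_inv A_rec by blast
  interpret L: L2 br A by (rule L2)
  show ?thesis
  proof (rule conjI)
    show "\<exists>B :: nat \<Rightarrow> 'a list \<Rightarrow> 'a.
            (\<forall>n\<ge>2. multilinear n (B n) \<and> invariant br n (B n) \<and> symmetric_map n (B n)) \<and>
            (\<forall>n\<ge>2. \<forall>x y. diag n (A n) x y =
               A0 br (replicate n x) y
               + (\<Sum>k=1..n div 2. \<Sum>ls\<in>{ls. length ls = k \<and> (\<forall>l\<in>set ls. 2 \<le> l) \<and> sum_list ls \<le> n}.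
                    A0 br (map (\<lambda>l. B l (replicate l x)) ls)
                       (A0 br (replicate (n - sum_list ls) x) y)))"
      by (rule L.existence)
  next
    show "\<forall>B B' :: nat \<Rightarrow> 'a list \<Rightarrow> 'a.
            ((\<forall>n\<ge>2. multilinear n (B n) \<and> invariant br n (B n) \<and> symmetric_map n (B n)) \<and>
             (\<forall>n\<ge>2. \<forall>x y. diag n (A n) x y =
               A0 br (replicate n x) y
               + (\<Sum>k=1..n div 2. \<Sum>ls\<in>{ls. length ls = k \<and> (\<forall>l\<in>set ls. 2 \<le> l) \<and> sum_list ls \<le> n}.
                    A0 br (map (\<lambda>l. B l (replicate l x)) ls)
                       (A0 br (replicate (n - sum_list ls) x) y)))) \<and>
            ((\<forall>n\<ge>2. multilinear n (B' n) \<and> invariant br n (B' n) \<and> symmetric_map n (B' n)) \<and>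
             (\<forall>n\<ge>2. \<forall>x y. diag n (A n) x y =
               A0 br (replicate n x) y
               + (\<Sum>k=1..n div 2. \<Sum>ls\<in>{ls. length ls = k \<and> (\<forall>l\<in>set ls. 2 \<le> l) \<and> sum_list ls \<le> n}.
                    A0 br (map (\<lambda>l. B' l (replicate l x)) ls)
                       (A0 br (replicate (n - sum_list ls) x) y))))
            \<longrightarrow> (\<forall>n\<ge>2. \<forall>xs. length xs = n \<longrightarrow> B n xs = B' n xs)"
    proof (intro allI, rule impI)
      fix B B' :: "nat \<Rightarrow> 'a list \<Rightarrow> 'a"
      assume h: "((\<forall>n\<ge>2. multilinear n (B n) \<and> invariant br n (B n) \<and> symmetric_map n (B n)) \<and>
             (\<forall>n\<ge>2. \<forall>x y. diag n (A n) x y =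
               A0 br (replicate n x) y
               + (\<Sum>k=1..n div 2. \<Sum>ls\<in>{ls. length ls = k \<and> (\<forall>l\<in>set ls. 2 \<le> l) \<and> sum_list ls \<le> n}.
                    A0 br (map (\<lambda>l. B l (replicate l x)) ls)
                       (A0 br (replicate (n - sum_list ls) x) y)))) \<and>
            ((\<forall>n\<ge>2. multilinear n (B' n) \<and> invariant br n (B' n) \<and> symmetric_map n (B' n)) \<and>
             (\<forall>n\<ge>2. \<forall>x y. diag n (A n) x y =
               A0 br (replicate n x) y
               + (\<Sum>k=1..n div 2. \<Sum>ls\<in>{ls. length ls = k \<and> (\<forall>l\<in>set ls. 2 \<le> l) \<and> sum_list ls \<le> n}.
                    A0 br (map (\<lambda>l. B' l (replicate l x)) ls)
                       (A0 br (replicate (n - sum_list ls) x) y))))"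
      show "\<forall>n\<ge>2. \<forall>xs. length xs = n \<longrightarrow> B n xs = B' n xs"
        using L.uniqueness[of B B'] h by blast
    qed
  qed
qed

end
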